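(* Let $p$ be an odd prime and $d\ge2$. Let $s_n$ denote the number of open subgroups of index at most $n$ in $SL_d(\mathbb Z_p)$. Then there are infinitely many positive integers $n$ with $s_n\ge n^{c}$, where $c=(3-2\sqrt2)d^2-2(2-\sqrt2)$.
   Context: $\mathbb Z_p$ denotes the ring of $p$-adic integers. *)

theory Defs
  imports Complex_Main "HOL-Algebra.Coset" "Jordan_Normal_Form.Determinant"
begin

text \<open>SL_d(Z_p) realised as the inverse limit of the groups SL_d(Z/p^k Z), k = 0,1,2,...\<close>

definition red_mat :: "int \<Rightarrow> int mat \<Rightarrow> int mat" where
  "red_mat q M = map_mat (\<lambda>x. x mod q) M"

definition SL_Zp_carrier :: "nat \<Rightarrow> nat \<Rightarrow> (nat \<Rightarrow> int mat) set" where
  "SL_Zp_carrier p d = {A. \<forall>k.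
       A k \<in> carrier_mat d d
     \<and> (\<forall>i<d. \<forall>j<d. 0 \<le> A k $$ (i,j) \<and> A k $$ (i,j) < int p ^ k)
     \<and> det (A k) mod (int p ^ k) = 1 mod (int p ^ k)
     \<and> red_mat (int p ^ k) (A (Suc k)) = A k}"

definition SL_Zp :: "nat \<Rightarrow> nat \<Rightarrow> (nat \<Rightarrow> int mat) monoid" where
  "SL_Zp p d = \<lparr> partial_object.carrier = SL_Zp_carrier p d,
                 monoid.mult = (\<lambda>A B k. red_mat (int p ^ k) (A k * B k)),
                 monoid.one = (\<lambda>k. red_mat (int p ^ k) (1\<^sub>m d)) \<rparr>"

text \<open>Open subgroups: with the inverse-limit (p-adic) topology, the kernels of the
  reduction maps mod p^k form a neighbourhood basis of the identity, so a subgroup is open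
  iff it contains one of these congruence kernels.\<close>

definition open_subgroup_SL :: "nat \<Rightarrow> nat \<Rightarrow> (nat \<Rightarrow> int mat) set \<Rightarrow> bool" where
  "open_subgroup_SL p d H \<longleftrightarrow> subgroup H (SL_Zp p d) \<and>
     (\<exists>k. {A \<in> carrier (SL_Zp p d). A k = one (SL_Zp p d) k} \<subseteq> H)"

definition num_open_subgroups :: "nat \<Rightarrow> nat \<Rightarrow> nat \<Rightarrow> nat" where
  "num_open_subgroups p d n = card {H. open_subgroup_SL p d H \<and>
      finite (rcosets\<^bsub>SL_Zp p d\<^esub> H) \<and> card (rcosets\<^bsub>SL_Zp p d\<^esub> H) \<le> n}"

end

theory Submission
  imports Defs
begin

lemma red_dim[simp]: "dim_row (red_mat q A) = dim_row A" "dim_col (red_mat q A) = dim_col A"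
  by (auto simp: red_mat_def)

lemma red_carrier[simp]: "A \<in> carrier_mat n m \<Longrightarrow> red_mat q A \<in> carrier_mat n m"
  by (auto simp: red_mat_def)

lemma red_index[simp]: "i < dim_row A \<Longrightarrow> j < dim_col A \<Longrightarrow> red_mat q A $$ (i,j) = A $$ (i,j) mod q"
  by (auto simp: red_mat_def)

lemma red_red: "q' dvd q \<Longrightarrow> red_mat q' (red_mat q A) = red_mat q' A"
  by (rule eq_matI) (auto simp: mod_mod_cancel)

lemma red_red_same[simp]: "red_mat q (red_mat q A) = red_mat q A"
  by (rule red_red) simp

lemma red_mult_left: assumes "dim_col A = dim_row B"
  shows "red_mat q (red_mat q A * B) = red_mat q (A * B)"
proof (rule eq_matI)
  fix i j assume ij: "i < dim_row (red_mat q (A * B))" "j < dim_col (red_mat q (A * B))"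
  have "(\<Sum>k = 0..<dim_row B. (A $$ (i, k) mod q) * B $$ (k, j)) mod q
      = (\<Sum>k = 0..<dim_row B. ((A $$ (i, k) mod q) * B $$ (k, j)) mod q) mod q"
    by (simp add: mod_sum_eq)
  also have "\<dots> = (\<Sum>k = 0..<dim_row B. (A $$ (i, k) * B $$ (k, j)) mod q) mod q"
    by (simp add: mod_mult_left_eq)
  also have "\<dots> = (\<Sum>k = 0..<dim_row B. A $$ (i, k) * B $$ (k, j)) mod q"
    by (simp add: mod_sum_eq)
  finally show "red_mat q (red_mat q A * B) $$ (i, j) = red_mat q (A * B) $$ (i, j)"
    using ij assms by (simp add: scalar_prod_def)
qed auto

lemma red_mult_right: assumes "dim_col A = dim_row B"
  shows "red_mat q (A * red_mat q B) = red_mat q (A * B)"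
proof (rule eq_matI)
  fix i j assume ij: "i < dim_row (red_mat q (A * B))" "j < dim_col (red_mat q (A * B))"
  have "(\<Sum>k = 0..<dim_row B. A $$ (i, k) * (B $$ (k, j) mod q)) mod q
      = (\<Sum>k = 0..<dim_row B. (A $$ (i, k) * (B $$ (k, j) mod q)) mod q) mod q"
    by (simp add: mod_sum_eq)
  also have "\<dots> = (\<Sum>k = 0..<dim_row B. (A $$ (i, k) * B $$ (k, j)) mod q) mod q"
    by (simp add: mod_mult_right_eq)
  also have "\<dots> = (\<Sum>k = 0..<dim_row B. A $$ (i, k) * B $$ (k, j)) mod q"
    by (simp add: mod_sum_eq)
  finally show "red_mat q (A * red_mat q B) $$ (i, j) = red_mat q (A * B) $$ (i, j)"
    using ij assms by (simp add: scalar_prod_def)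
qed auto

lemma red_mult: assumes "dim_col A = dim_row B"
  shows "red_mat q (red_mat q A * red_mat q B) = red_mat q (A * B)"
  using red_mult_left[of "A" "red_mat q B" q] red_mult_right[OF assms, of q] assms by simp

lemma red_mult_cong: assumes "dim_col A = dim_row B" "dim_col A' = dim_row B'"
  "red_mat q A = red_mat q A'" "red_mat q B = red_mat q B'"
  shows "red_mat q (A * B) = red_mat q (A' * B')"
  using red_mult[OF assms(1), of q] red_mult[OF assms(2), of q] assms(3,4) by metis

lemma red_id: assumes "\<And>i j. i < dim_row A \<Longrightarrow> j < dim_col A \<Longrightarrow> 0 \<le> A $$ (i,j) \<and> A $$ (i,j) < q"
  shows "red_mat q A = A"
  by (rule eq_matI) (use assms in auto)

lemma red_eqD: "red_mat q A = red_mat q B \<Longrightarrow> i < dim_row A \<Longrightarrow> j < dim_col A \<Longrightarrow>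
   A $$ (i,j) mod q = B $$ (i,j) mod q"
  by (metis red_dim red_index)

lemma red_det: assumes A: "A \<in> carrier_mat n n" and B: "B \<in> carrier_mat n n"
  and r: "red_mat q A = red_mat q B"
  shows "det A mod q = det B mod q"
proof -
  have e: "A $$ (i,j) mod q = B $$ (i,j) mod q" if "i < n" "j < n" for i j
    using red_eqD[OF r] that A by auto
  have pr: "(\<Prod>i = 0..<n. A $$ (i, f i)) mod q = (\<Prod>i = 0..<n. B $$ (i, f i)) mod q"
    if f: "f permutes {0..<n}" for f
  proof -
    have fi: "i < n \<Longrightarrow> f i < n" for i using f by (meson atLeastLessThan_iff permutes_in_image zero_le)
    have "(\<Prod>i = 0..<n. A $$ (i, f i)) mod q = (\<Prod>i = 0..<n. A $$ (i, f i) mod q) mod q"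
      by (simp add: mod_prod_eq)
    also have "\<dots> = (\<Prod>i = 0..<n. B $$ (i, f i) mod q) mod q"
      using e fi by (auto intro!: arg_cong[where f="\<lambda>x. x mod q"] prod.cong)
    also have "\<dots> = (\<Prod>i = 0..<n. B $$ (i, f i)) mod q" by (simp add: mod_prod_eq)
    finally show ?thesis .
  qed
  have key: "(signof f * (\<Prod>i = 0..<n. A $$ (i, f i))) mod q = (signof f * (\<Prod>i = 0..<n. B $$ (i, f i))) mod q"
    if "f \<in> {f. f permutes {0..<n}}" for f
  proof -
    have "(signof f * (\<Prod>i = 0..<n. A $$ (i, f i))) mod q = (signof f * ((\<Prod>i = 0..<n. A $$ (i, f i)) mod q)) mod q"
      by (simp add: mod_mult_right_eq)
    also have "\<dots> = (signof f * ((\<Prod>i = 0..<n. B $$ (i, f i)) mod q)) mod q"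
      using pr[of f] that by simp
    also have "\<dots> = (signof f * (\<Prod>i = 0..<n. B $$ (i, f i))) mod q"
      by (simp add: mod_mult_right_eq)
    finally show ?thesis .
  qed
  have "det A mod q = (\<Sum>f\<in>{f. f permutes {0..<n}}. (signof f * (\<Prod>i = 0..<n. A $$ (i, f i))) mod q) mod q"
    unfolding det_def'[OF A] by (simp add: mod_sum_eq)
  also have "\<dots> = (\<Sum>f\<in>{f. f permutes {0..<n}}. (signof f * (\<Prod>i = 0..<n. B $$ (i, f i))) mod q) mod q"
    by (rule arg_cong[where f="\<lambda>x. x mod q"], rule sum.cong, simp, rule key)
  also have "\<dots> = det B mod q"
    unfolding det_def'[OF B] by (simp add: mod_sum_eq)
  finally show ?thesis .
qed


lemma red_mat_delete: assumes "red_mat q A = red_mat q B" "dim_row A = dim_row B" "dim_col A = dim_col B"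
  shows "red_mat q (mat_delete A i j) = red_mat q (mat_delete B i j)"
proof (rule eq_matI)
  fix a b assume ab: "a < dim_row (red_mat q (mat_delete B i j))" "b < dim_col (red_mat q (mat_delete B i j))"
  show "red_mat q (mat_delete A i j) $$ (a, b) = red_mat q (mat_delete B i j) $$ (a, b)"
    using ab assms red_eqD[OF assms(1)] by (auto simp: mat_delete_def)
qed (use assms in auto)

lemma red_adj: assumes A: "A \<in> carrier_mat n n" and B: "B \<in> carrier_mat n n"
  and r: "red_mat q A = red_mat q B"
  shows "red_mat q (adj_mat A) = red_mat q (adj_mat B)"
proof (rule eq_matI)
  fix i j assume ij: "i < dim_row (red_mat q (adj_mat B))" "j < dim_col (red_mat q (adj_mat B))"
  have d: "det (mat_delete A j i) mod q = det (mat_delete B j i) mod q"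
    by (rule red_det[OF mat_delete_carrier[OF A] mat_delete_carrier[OF B] red_mat_delete[OF r]]) (use A B in auto)
  have "((-1)^(j+i) * det (mat_delete A j i)) mod q = ((-1)^(j+i) * det (mat_delete B j i)) mod q"
    by (metis d mod_mult_right_eq)
  then show "red_mat q (adj_mat A) $$ (i, j) = red_mat q (adj_mat B) $$ (i, j)"
    using ij A B by (simp add: adj_mat_def cofactor_def)
qed (use A B in \<open>auto simp: adj_mat_def\<close>)

locale slp =
  fixes p d :: nat
  assumes p2: "2 \<le> p"
begin

abbreviation G where "G \<equiv> SL_Zp p d"

lemma carrier_G: "carrier G = SL_Zp_carrier p d" by (simp add: SL_Zp_def)
lemma mult_G: "x \<otimes>\<^bsub>G\<^esub> y = (\<lambda>k. red_mat (int p ^ k) (x k * y k))" by (simp add: SL_Zp_def)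
lemma one_G: "\<one>\<^bsub>G\<^esub> = (\<lambda>k. red_mat (int p ^ k) (1\<^sub>m d))" by (simp add: SL_Zp_def)

lemma qpos: "int p ^ k > 0" using p2 by simp

lemma G_mem: "x \<in> carrier G \<longleftrightarrow> (\<forall>k.
       x k \<in> carrier_mat d d
     \<and> (\<forall>i<d. \<forall>j<d. 0 \<le> x k $$ (i,j) \<and> x k $$ (i,j) < int p ^ k)
     \<and> det (x k) mod (int p ^ k) = 1 mod (int p ^ k)
     \<and> red_mat (int p ^ k) (x (Suc k)) = x k)"
  by (simp add: carrier_G SL_Zp_carrier_def)

lemma G_car: "x \<in> carrier G \<Longrightarrow> x k \<in> carrier_mat d d" using G_mem by blast
lemma G_det: "x \<in> carrier G \<Longrightarrow> det (x k) mod (int p ^ k) = 1 mod (int p ^ k)" using G_mem by blast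
lemma G_suc: "x \<in> carrier G \<Longrightarrow> red_mat (int p ^ k) (x (Suc k)) = x k" using G_mem by blast
lemma G_range: "x \<in> carrier G \<Longrightarrow> i < d \<Longrightarrow> j < d \<Longrightarrow> 0 \<le> x k $$ (i,j) \<and> x k $$ (i,j) < int p ^ k"
  using G_mem by blast

lemma G_red_self: "x \<in> carrier G \<Longrightarrow> red_mat (int p ^ k) (x k) = x k"
proof (rule red_id)
  fix i j assume x: "x \<in> carrier G" and ij: "i < dim_row (x k)" "j < dim_col (x k)"
  with G_car[OF x, of k] have "i < d" "j < d" by auto
  then show "0 \<le> x k $$ (i, j) \<and> x k $$ (i, j) < int p ^ k" using G_range[OF x] by auto
qed

lemma G_lower: assumes x: "x \<in> carrier G" and jk: "j \<le> k"
  shows "red_mat (int p ^ j) (x k) = x j"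
  using jk
proof (induction k)
  case 0 then show ?case using G_red_self[OF x, of 0] by simp
next
  case (Suc k)
  show ?case
  proof (cases "j = Suc k")
    case True then show ?thesis using G_red_self[OF x, of "Suc k"] by simp
  next
    case False
    then have "j \<le> k" using Suc by simp
    have "red_mat (int p ^ j) (x (Suc k)) = red_mat (int p ^ j) (red_mat (int p ^ k) (x (Suc k)))"
      by (rule red_red[symmetric]) (simp add: \<open>j \<le> k\<close> le_imp_power_dvd)
    also have "\<dots> = x j" using G_suc[OF x] Suc.IH[OF \<open>j \<le> k\<close>] by simp
    finally show ?thesis .
  qed
qed

lemma red_det_mod: assumes "A \<in> carrier_mat n n"
  shows "det (red_mat q A) mod q = det A mod q"
  by (rule red_det[OF _ assms]) (use assms in auto)

lemma mult_closed: assumes x: "x \<in> carrier G" and y: "y \<in> carrier G"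
  shows "x \<otimes>\<^bsub>G\<^esub> y \<in> carrier G"
  unfolding G_mem mult_G
proof (rule allI, intro conjI)
  fix k
  have xk: "x k \<in> carrier_mat d d" and yk: "y k \<in> carrier_mat d d" using G_car x y by auto
  show "red_mat (int p ^ k) (x k * y k) \<in> carrier_mat d d" using xk yk by auto
  show "\<forall>i<d. \<forall>j<d. 0 \<le> red_mat (int p ^ k) (x k * y k) $$ (i, j) \<and>
      red_mat (int p ^ k) (x k * y k) $$ (i, j) < int p ^ k"
    using xk yk qpos[of k] by auto
  have "det (red_mat (int p ^ k) (x k * y k)) mod int p ^ k = det (x k * y k) mod int p ^ k"
    by (rule red_det_mod) (use xk yk in auto)
  also have "\<dots> = (det (x k) * det (y k)) mod int p ^ k" using det_mult xk yk by metis
  also have "\<dots> = ((det (x k) mod int p ^ k) * (det (y k) mod int p ^ k)) mod int p ^ k"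
    by (simp add: mod_mult_eq)
  also have "\<dots> = 1 mod int p ^ k" using G_det[OF x, of k] G_det[OF y, of k]
    by (simp add: mod_mult_eq)
  finally show "det (red_mat (int p ^ k) (x k * y k)) mod int p ^ k = 1 mod int p ^ k" .
  have xs: "x (Suc k) \<in> carrier_mat d d" and ys: "y (Suc k) \<in> carrier_mat d d" using G_car x y by auto
  have "red_mat (int p ^ k) (red_mat (int p ^ Suc k) (x (Suc k) * y (Suc k)))
      = red_mat (int p ^ k) (x (Suc k) * y (Suc k))"
    by (rule red_red) (simp add: le_imp_power_dvd)
  also have "\<dots> = red_mat (int p ^ k) (red_mat (int p ^ k) (x (Suc k)) * red_mat (int p ^ k) (y (Suc k)))"
    using red_mult xs ys by (metis carrier_matD(1) carrier_matD(2))
  also have "\<dots> = red_mat (int p ^ k) (x k * y k)" using G_suc x y by simp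
  finally show "red_mat (int p ^ k) (red_mat (int p ^ Suc k) (x (Suc k) * y (Suc k))) =
    red_mat (int p ^ k) (x k * y k)" .
qed

lemma one_closed: "\<one>\<^bsub>G\<^esub> \<in> carrier G"
  unfolding G_mem one_G
proof (rule allI, intro conjI)
  fix k
  show "red_mat (int p ^ k) (1\<^sub>m d) \<in> carrier_mat d d" by simp
  show "\<forall>i<d. \<forall>j<d. 0 \<le> red_mat (int p ^ k) (1\<^sub>m d) $$ (i, j) \<and>
      red_mat (int p ^ k) (1\<^sub>m d) $$ (i, j) < int p ^ k" using qpos[of k] by auto
  show "det (red_mat (int p ^ k) (1\<^sub>m d)) mod int p ^ k = 1 mod int p ^ k"
    using red_det_mod[of "1\<^sub>m d" d "int p ^ k"] by simp
  show "red_mat (int p ^ k) (red_mat (int p ^ Suc k) (1\<^sub>m d)) = red_mat (int p ^ k) (1\<^sub>m d)"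
    by (rule red_red) (simp add: le_imp_power_dvd)
qed

lemma m_assoc: assumes x: "x \<in> carrier G" and y: "y \<in> carrier G" and z: "z \<in> carrier G"
  shows "(x \<otimes>\<^bsub>G\<^esub> y) \<otimes>\<^bsub>G\<^esub> z = x \<otimes>\<^bsub>G\<^esub> (y \<otimes>\<^bsub>G\<^esub> z)"
proof -
  have "red_mat (int p ^ k) (red_mat (int p ^ k) (x k * y k) * z k) =
        red_mat (int p ^ k) (x k * red_mat (int p ^ k) (y k * z k))" for k
  proof -
    have c: "x k \<in> carrier_mat d d" "y k \<in> carrier_mat d d" "z k \<in> carrier_mat d d" using G_car x y z by auto
    have "red_mat (int p ^ k) (red_mat (int p ^ k) (x k * y k) * z k) = red_mat (int p ^ k) (x k * y k * z k)"
      by (rule red_mult_left) (use c in auto)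
    also have "\<dots> = red_mat (int p ^ k) (x k * (y k * z k))" using c by simp
    also have "\<dots> = red_mat (int p ^ k) (x k * red_mat (int p ^ k) (y k * z k))"
      by (rule red_mult_right[symmetric]) (use c in auto)
    finally show ?thesis .
  qed
  then show ?thesis unfolding mult_G by auto
qed

lemma l_one: assumes x: "x \<in> carrier G" shows "\<one>\<^bsub>G\<^esub> \<otimes>\<^bsub>G\<^esub> x = x"
proof -
  have "red_mat (int p ^ k) (red_mat (int p ^ k) (1\<^sub>m d) * x k) = x k" for k
    using red_mult_left[of "1\<^sub>m d" "x k" "int p ^ k"] G_car[OF x, of k] G_red_self[OF x, of k] by simp
  then show ?thesis unfolding mult_G one_G by auto
qed

lemma r_one: assumes x: "x \<in> carrier G" shows "x \<otimes>\<^bsub>G\<^esub> \<one>\<^bsub>G\<^esub> = x"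
proof -
  have "red_mat (int p ^ k) (x k * red_mat (int p ^ k) (1\<^sub>m d)) = x k" for k
    using red_mult_right[of "x k" "1\<^sub>m d" "int p ^ k"] G_car[OF x, of k] G_red_self[OF x, of k] by simp
  then show ?thesis unfolding mult_G one_G by auto
qed

definition adjinv :: "(nat \<Rightarrow> int mat) \<Rightarrow> nat \<Rightarrow> int mat" where
  "adjinv x = (\<lambda>k. red_mat (int p ^ k) (adj_mat (x k)))"

lemma red_smult_one: assumes "a mod q = 1 mod q"
  shows "red_mat q (a \<cdot>\<^sub>m 1\<^sub>m n) = red_mat q (1\<^sub>m n)"
  by (rule eq_matI) (use assms in auto)

lemma adjinv_closed: assumes x: "x \<in> carrier G" shows "adjinv x \<in> carrier G"
  unfolding G_mem adjinv_def
proof (rule allI, intro conjI)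
  fix k
  have xk: "x k \<in> carrier_mat d d" using G_car x by auto
  note adj = adj_mat[OF xk]
  show "red_mat (int p ^ k) (adj_mat (x k)) \<in> carrier_mat d d" using adj by auto
  show "\<forall>i<d. \<forall>j<d. 0 \<le> red_mat (int p ^ k) (adj_mat (x k)) $$ (i, j) \<and>
      red_mat (int p ^ k) (adj_mat (x k)) $$ (i, j) < int p ^ k"
    using adj qpos[of k] by auto
  let ?q = "int p ^ k"
  have "det (x k) * det (adj_mat (x k)) = det (x k) ^ d"
    using det_mult[OF xk adj(1)] adj(2) by simp
  then have "(det (x k) * det (adj_mat (x k))) mod ?q = det (x k) ^ d mod ?q" by simp
  then have "((det (x k) mod ?q) * det (adj_mat (x k))) mod ?q = (det (x k) mod ?q) ^ d mod ?q"
    by (simp add: mod_mult_left_eq power_mod)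
  then have "det (adj_mat (x k)) mod ?q = 1 mod ?q"
    using G_det[OF x, of k] by (simp add: mod_mult_left_eq power_mod)
  then show "det (red_mat ?q (adj_mat (x k))) mod ?q = 1 mod ?q"
    using red_det_mod[OF adj(1), of ?q] by simp
  have xs: "x (Suc k) \<in> carrier_mat d d" using G_car x by auto
  have "red_mat ?q (red_mat (int p ^ Suc k) (adj_mat (x (Suc k)))) = red_mat ?q (adj_mat (x (Suc k)))"
    by (rule red_red) (simp add: le_imp_power_dvd)
  also have "\<dots> = red_mat ?q (adj_mat (red_mat ?q (x (Suc k))))"
    by (rule red_adj[OF xs]) (use xs in auto)
  also have "\<dots> = red_mat ?q (adj_mat (x k))" using G_suc x by simp
  finally show "red_mat ?q (red_mat (int p ^ Suc k) (adj_mat (x (Suc k)))) = red_mat ?q (adj_mat (x k))" .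
qed

lemma adjinv_l: assumes x: "x \<in> carrier G" shows "adjinv x \<otimes>\<^bsub>G\<^esub> x = \<one>\<^bsub>G\<^esub>"
proof -
  have "red_mat (int p ^ k) (red_mat (int p ^ k) (adj_mat (x k)) * x k) = red_mat (int p ^ k) (1\<^sub>m d)" for k
  proof -
    have xk: "x k \<in> carrier_mat d d" using G_car x by auto
    note adj = adj_mat[OF xk]
    have "red_mat (int p ^ k) (red_mat (int p ^ k) (adj_mat (x k)) * x k) = red_mat (int p ^ k) (adj_mat (x k) * x k)"
      by (rule red_mult_left) (use adj xk in auto)
    also have "\<dots> = red_mat (int p ^ k) (1\<^sub>m d)" using adj(3) red_smult_one G_det[OF x] by simp
    finally show ?thesis .
  qed
  then show ?thesis unfolding mult_G one_G adjinv_def by auto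
qed

lemma adjinv_r: assumes x: "x \<in> carrier G" shows "x \<otimes>\<^bsub>G\<^esub> adjinv x = \<one>\<^bsub>G\<^esub>"
proof -
  have "red_mat (int p ^ k) (x k * red_mat (int p ^ k) (adj_mat (x k))) = red_mat (int p ^ k) (1\<^sub>m d)" for k
  proof -
    have xk: "x k \<in> carrier_mat d d" using G_car x by auto
    note adj = adj_mat[OF xk]
    have "red_mat (int p ^ k) (x k * red_mat (int p ^ k) (adj_mat (x k))) = red_mat (int p ^ k) (x k * adj_mat (x k))"
      by (rule red_mult_right) (use adj xk in auto)
    also have "\<dots> = red_mat (int p ^ k) (1\<^sub>m d)" using adj(2) red_smult_one G_det[OF x] by simp
    finally show ?thesis .
  qed
  then show ?thesis unfolding mult_G one_G adjinv_def by auto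
qed

lemma is_group: "group G"
  by (rule groupI) (auto intro: mult_closed one_closed m_assoc l_one adjinv_closed adjinv_l)

lemma inv_G: "x \<in> carrier G \<Longrightarrow> inv\<^bsub>G\<^esub> x = adjinv x"
  using group.inv_equality[OF is_group] adjinv_l adjinv_closed by blast

sublocale grp: group G by (rule is_group)

end

lemma A1: fixes X Y :: "int mat" assumes X: "X \<in> carrier_mat n n" and Y: "Y \<in> carrier_mat n n"
  shows "(1\<^sub>m n + r \<cdot>\<^sub>m X) * (1\<^sub>m n + r \<cdot>\<^sub>m Y) = 1\<^sub>m n + r \<cdot>\<^sub>m (X + Y) + (r * r) \<cdot>\<^sub>m (X * Y)"
  (is "?L = ?R")
proof -
  have "?L = (1\<^sub>m n + r \<cdot>\<^sub>m X) * 1\<^sub>m n + (1\<^sub>m n + r \<cdot>\<^sub>m X) * (r \<cdot>\<^sub>m Y)"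
    by (rule mult_add_distrib_mat) (use X Y in auto)
  also have "\<dots> = (1\<^sub>m n + r \<cdot>\<^sub>m X) + (1\<^sub>m n * (r \<cdot>\<^sub>m Y) + (r \<cdot>\<^sub>m X) * (r \<cdot>\<^sub>m Y))"
  proof -
    have "(1\<^sub>m n + r \<cdot>\<^sub>m X) * 1\<^sub>m n = 1\<^sub>m n + r \<cdot>\<^sub>m X" by (rule right_mult_one_mat) (use X in auto)
    then show ?thesis using add_mult_distrib_mat[of "1\<^sub>m n" n n "r \<cdot>\<^sub>m X" "r \<cdot>\<^sub>m Y" n] X Y by simp
  qed
  also have "\<dots> = (1\<^sub>m n + r \<cdot>\<^sub>m X) + (r \<cdot>\<^sub>m Y + (r * r) \<cdot>\<^sub>m (X * Y))"
  proof -
    have "(r \<cdot>\<^sub>m X) * (r \<cdot>\<^sub>m Y) = (r * r) \<cdot>\<^sub>m (X * Y)"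
      by (rule eq_matI) (use X Y in \<open>auto simp: sum_distrib_left scalar_prod_def algebra_simps intro!: sum.cong\<close>)
    then show ?thesis using X Y by simp
  qed
  also have "\<dots> = ?R"
    by (rule eq_matI) (use X Y in \<open>auto simp: algebra_simps\<close>)
  finally show ?thesis .
qed

lemma red_add_mult: assumes A: "A \<in> carrier_mat n m" and B: "B \<in> carrier_mat n m"
  shows "red_mat q (A + q \<cdot>\<^sub>m B) = red_mat q A"
  by (rule eq_matI) (use A B in auto)

lemma red_add_cong: assumes "A \<in> carrier_mat n m" "B \<in> carrier_mat n m" "A' \<in> carrier_mat n m" "B' \<in> carrier_mat n m"
  "red_mat q A = red_mat q A'" "red_mat q B = red_mat q B'"
  shows "red_mat q (A + B) = red_mat q (A' + B')"
proof (rule eq_matI)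
  fix i j assume ij: "i < dim_row (red_mat q (A' + B'))" "j < dim_col (red_mat q (A' + B'))"
  have "A $$ (i,j) mod q = A' $$ (i,j) mod q" "B $$ (i,j) mod q = B' $$ (i,j) mod q"
    using red_eqD[OF assms(5)] red_eqD[OF assms(6)] ij assms(1-4) by auto
  then have "(A $$ (i,j) + B $$ (i,j)) mod q = (A' $$ (i,j) + B' $$ (i,j)) mod q"
    by (metis mod_add_eq)
  then show "red_mat q (A + B) $$ (i, j) = red_mat q (A' + B') $$ (i, j)"
    using ij assms(1-4) by simp
qed (use assms in auto)

lemma red_smult_cong: assumes "A \<in> carrier_mat n m" "A' \<in> carrier_mat n m" "red_mat q A = red_mat q A'"
  shows "red_mat q (c \<cdot>\<^sub>m A) = red_mat q (c \<cdot>\<^sub>m A')"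
proof (rule eq_matI)
  fix i j assume ij: "i < dim_row (red_mat q (c \<cdot>\<^sub>m A'))" "j < dim_col (red_mat q (c \<cdot>\<^sub>m A'))"
  have "A $$ (i,j) mod q = A' $$ (i,j) mod q"
    using red_eqD[OF assms(3)] ij assms(1-2) by auto
  then have "(c * A $$ (i,j)) mod q = (c * A' $$ (i,j)) mod q"
    by (metis mod_mult_right_eq)
  then show "red_mat q (c \<cdot>\<^sub>m A) $$ (i, j) = red_mat q (c \<cdot>\<^sub>m A') $$ (i, j)"
    using ij assms(1-2) by simp
qed (use assms in auto)

lemma CP: assumes A: "A \<in> carrier_mat n n" and B: "B \<in> carrier_mat n n"
  and X: "X \<in> carrier_mat n n" and Y: "Y \<in> carrier_mat n n"
  and hA: "red_mat (r*r) A = red_mat (r*r) (1\<^sub>m n + r \<cdot>\<^sub>m X)"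
  and hB: "red_mat (r*r) B = red_mat (r*r) (1\<^sub>m n + r \<cdot>\<^sub>m Y)"
  shows "red_mat (r*r) (A * B) = red_mat (r*r) (1\<^sub>m n + r \<cdot>\<^sub>m (X + Y))"
proof -
  have "red_mat (r*r) (A * B) = red_mat (r*r) ((1\<^sub>m n + r \<cdot>\<^sub>m X) * (1\<^sub>m n + r \<cdot>\<^sub>m Y))"
    by (rule red_mult_cong) (use A B X Y hA hB in auto)
  also have "\<dots> = red_mat (r*r) (1\<^sub>m n + r \<cdot>\<^sub>m (X + Y) + (r * r) \<cdot>\<^sub>m (X * Y))"
    using A1[OF X Y] by simp
  also have "\<dots> = red_mat (r*r) (1\<^sub>m n + r \<cdot>\<^sub>m (X + Y))"
    by (rule red_add_mult[of _ n n]) (use X Y in auto)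
  finally show ?thesis .
qed

lemma cong_exact: assumes A: "A \<in> carrier_mat n m" and B: "B \<in> carrier_mat n m"
  and r: "red_mat q A = red_mat q B"
  shows "\<exists>C \<in> carrier_mat n m. A = B + q \<cdot>\<^sub>m C"
proof
  let ?C = "mat n m (\<lambda>(i,j). (A $$ (i,j) - B $$ (i,j)) div q)"
  show "?C \<in> carrier_mat n m" by simp
  show "A = B + q \<cdot>\<^sub>m ?C"
  proof (rule eq_matI)
    fix i j assume ij: "i < dim_row (B + q \<cdot>\<^sub>m ?C)" "j < dim_col (B + q \<cdot>\<^sub>m ?C)"
    then have ij': "i < n" "j < m" using B by auto
    have "A $$ (i,j) mod q = B $$ (i,j) mod q" using red_eqD[OF r] ij' A by auto
    then have "q dvd A $$ (i,j) - B $$ (i,j)" by (simp add: mod_eq_dvd_iff)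
    then show "A $$ (i, j) = (B + q \<cdot>\<^sub>m ?C) $$ (i, j)" using ij' A B by auto
  qed (use A B in auto)
qed

lemma pow_cong: assumes A: "A \<in> carrier_mat n n" and Z: "Z \<in> carrier_mat n n"
  and hA: "red_mat (r*r) A = red_mat (r*r) (1\<^sub>m n + r \<cdot>\<^sub>m Z)"
  shows "red_mat (r*r) (A ^\<^sub>m j) = red_mat (r*r) (1\<^sub>m n + r \<cdot>\<^sub>m (int j \<cdot>\<^sub>m Z))"
proof (induction j)
  case 0
  have "1\<^sub>m n + r \<cdot>\<^sub>m (0 \<cdot>\<^sub>m Z) = 1\<^sub>m n" by (rule eq_matI) (use Z in auto)
  then show ?case using A by simp
next
  case (Suc j)
  have "red_mat (r*r) (A ^\<^sub>m j * A) = red_mat (r*r) (1\<^sub>m n + r \<cdot>\<^sub>m (int j \<cdot>\<^sub>m Z + Z))"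
    by (rule CP[OF _ A _ Z Suc.IH hA]) (use A Z in auto)
  also have "int j \<cdot>\<^sub>m Z + Z = int (Suc j) \<cdot>\<^sub>m Z" by (rule eq_matI) (use Z in \<open>auto simp: algebra_simps\<close>)
  finally show ?case by simp
qed

lemma pow_mat_add: assumes A: "A \<in> carrier_mat n n"
  shows "A ^\<^sub>m (a + b) = A ^\<^sub>m a * A ^\<^sub>m b"
proof (induction b)
  case 0 then show ?case using A by simp
next
  case (Suc b)
  then show ?case using A by (simp add: assoc_mult_mat[of _ n n _ n _ n])
qed

lemma pow_mat_mult: assumes A: "A \<in> carrier_mat n n"
  shows "A ^\<^sub>m (a * b) = (A ^\<^sub>m a) ^\<^sub>m b"
proof (induction b)
  case 0 then show ?case using A by simp
next
  case (Suc b)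
  have "A ^\<^sub>m (a * Suc b) = A ^\<^sub>m (a * b + a)" by (simp add: algebra_simps)
  also have "\<dots> = A ^\<^sub>m (a * b) * A ^\<^sub>m a" by (rule pow_mat_add[OF A])
  finally show ?case using Suc by simp
qed

lemma det_pow_one: assumes A: "A \<in> carrier_mat n n" and "det A = 1"
  shows "det (A ^\<^sub>m j) = 1"
proof (induction j)
  case 0 then show ?case using A by simp
next
  case (Suc j) then show ?case using det_mult[of "A ^\<^sub>m j" n A] A assms(2) by simp
qed

lemma exact_p_step:
  fixes p :: nat
  assumes Z: "Z \<in> carrier_mat n n" and s: "2 \<le> s"
  shows "\<exists>Z' \<in> carrier_mat n n. (1\<^sub>m n + (int p)^s \<cdot>\<^sub>m Z) ^\<^sub>m p = 1\<^sub>m n + (int p)^(Suc s) \<cdot>\<^sub>m Z'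
     \<and> red_mat (int p) Z' = red_mat (int p) Z"
proof -
  let ?r = "(int p)^s"
  let ?A = "1\<^sub>m n + ?r \<cdot>\<^sub>m Z"
  have A: "?A \<in> carrier_mat n n" using Z by auto
  have "red_mat (?r * ?r) (?A ^\<^sub>m p) = red_mat (?r * ?r) (1\<^sub>m n + ?r \<cdot>\<^sub>m (int p \<cdot>\<^sub>m Z))"
    by (rule pow_cong[OF A Z]) simp
  then obtain C where C: "C \<in> carrier_mat n n" and eq: "?A ^\<^sub>m p = 1\<^sub>m n + ?r \<cdot>\<^sub>m (int p \<cdot>\<^sub>m Z) + (?r * ?r) \<cdot>\<^sub>m C"
    using cong_exact[of "?A ^\<^sub>m p" n n "1\<^sub>m n + ?r \<cdot>\<^sub>m (int p \<cdot>\<^sub>m Z)"] Z A by auto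
  let ?Z' = "Z + (int p)^(s - 1) \<cdot>\<^sub>m C"
  have "s + s = Suc s + (s - 1)" using s by simp
  then have sc: "(int p)^s * (int p)^s = (int p)^(Suc s) * (int p)^(s-1)"
    by (metis power_add)
  have "?A ^\<^sub>m p = 1\<^sub>m n + (int p)^(Suc s) \<cdot>\<^sub>m ?Z'"
    unfolding eq
  proof (rule eq_matI)
    fix i j assume ij: "i < dim_row (1\<^sub>m n + int p ^ Suc s \<cdot>\<^sub>m ?Z')" "j < dim_col (1\<^sub>m n + int p ^ Suc s \<cdot>\<^sub>m ?Z')"
    then have "i < n" "j < n" using C by auto
    then show "(1\<^sub>m n + ?r \<cdot>\<^sub>m (int p \<cdot>\<^sub>m Z) + (?r * ?r) \<cdot>\<^sub>m C) $$ (i, j) = (1\<^sub>m n + int p ^ Suc s \<cdot>\<^sub>m ?Z') $$ (i, j)"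
      using Z C sc by (simp add: algebra_simps, blast)
  qed (use Z C in \<open>auto simp: carrier_matD\<close>)
  moreover have "red_mat (int p) ?Z' = red_mat (int p) Z"
  proof (rule eq_matI)
    fix i j assume ij: "i < dim_row (red_mat (int p) Z)" "j < dim_col (red_mat (int p) Z)"
    then have ij': "i < n" "j < n" using Z by auto
    have "(int p)^(s-1) = int p * (int p)^(s-2)" using s
      by (metis One_nat_def Suc_diff_Suc Suc_le_lessD numeral_2_eq_2 power_Suc)
    then have "(Z $$ (i,j) + (int p)^(s-1) * C $$ (i,j)) mod int p = Z $$ (i,j) mod int p" by (simp add: mult.assoc)
    then show "red_mat (int p) ?Z' $$ (i, j) = red_mat (int p) Z $$ (i, j)" using ij' Z C by simp
  qed (use Z C in \<open>auto simp: carrier_matD\<close>)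
  moreover have "?Z' \<in> carrier_mat n n" using Z C by auto
  ultimately show ?thesis by blast
qed

lemma exact_pe:
  fixes p :: nat
  assumes Z: "Z \<in> carrier_mat n n" and s: "2 \<le> s"
  shows "\<exists>Z' \<in> carrier_mat n n. (1\<^sub>m n + (int p)^s \<cdot>\<^sub>m Z) ^\<^sub>m (p^e) = 1\<^sub>m n + (int p)^(s + e) \<cdot>\<^sub>m Z'
     \<and> red_mat (int p) Z' = red_mat (int p) Z"
proof (induction e)
  case 0
  have "(1\<^sub>m n + (int p)^s \<cdot>\<^sub>m Z) ^\<^sub>m 1 = 1\<^sub>m n + (int p)^s \<cdot>\<^sub>m Z" using Z by simp
  then show ?case using Z by auto
next
  case (Suc e)
  then obtain Z1 where Z1: "Z1 \<in> carrier_mat n n" "(1\<^sub>m n + (int p)^s \<cdot>\<^sub>m Z) ^\<^sub>m (p^e) = 1\<^sub>m n + (int p)^(s + e) \<cdot>\<^sub>m Z1"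
    "red_mat (int p) Z1 = red_mat (int p) Z" by blast
  obtain Z2 where Z2: "Z2 \<in> carrier_mat n n" "(1\<^sub>m n + (int p)^(s+e) \<cdot>\<^sub>m Z1) ^\<^sub>m p = 1\<^sub>m n + (int p)^(Suc (s+e)) \<cdot>\<^sub>m Z2"
    "red_mat (int p) Z2 = red_mat (int p) Z1"
    using exact_p_step[OF Z1(1), of "s+e" p] s by auto
  have "(1\<^sub>m n + (int p)^s \<cdot>\<^sub>m Z) ^\<^sub>m (p^Suc e) = ((1\<^sub>m n + (int p)^s \<cdot>\<^sub>m Z) ^\<^sub>m (p^e)) ^\<^sub>m p"
    by (metis pow_mat_mult[of _ n] Z add_carrier_mat one_carrier_mat smult_carrier_mat power_Suc2)
  then show ?case using Z1 Z2 by auto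
qed

section \<open>Elementary matrices\<close>

definition Emat :: "nat \<Rightarrow> nat \<Rightarrow> nat \<Rightarrow> int mat" where
  "Emat n i j = mat n n (\<lambda>(a,b). if a = i \<and> b = j then 1 else 0)"

definition el :: "nat \<Rightarrow> nat \<Rightarrow> nat \<Rightarrow> int \<Rightarrow> int mat" where
  "el n i j s = 1\<^sub>m n + s \<cdot>\<^sub>m Emat n i j"

lemma Emat_carrier[simp]: "Emat n i j \<in> carrier_mat n n" by (simp add: Emat_def)
lemma Emat_dim[simp]: "dim_row (Emat n i j) = n" "dim_col (Emat n i j) = n" by (auto simp: Emat_def)
lemma Emat_index[simp]: "a < n \<Longrightarrow> b < n \<Longrightarrow> Emat n i j $$ (a,b) = (if a = i \<and> b = j then 1 else 0)"
  by (simp add: Emat_def)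
lemma el_carrier[simp]: "el n i j s \<in> carrier_mat n n" by (simp add: el_def)
lemma el_dim[simp]: "dim_row (el n i j s) = n" "dim_col (el n i j s) = n" by (auto simp: el_def)
lemma el_index[simp]: "a < n \<Longrightarrow> b < n \<Longrightarrow> el n i j s $$ (a,b) = (if a = b then 1 else 0) + (if a = i \<and> b = j then s else 0)"
  by (simp add: el_def)

lemma sum_if_eq: fixes n j :: nat shows "(\<Sum>k = 0..<n. (if k = j then f k else 0)) = (if j < n then f j else (0::int))"
  by (induct n) auto

lemma el_mult: assumes B: "B \<in> carrier_mat n m" and j: "j < n"
  shows "el n i j s * B = mat n m (\<lambda>(a,b). B $$ (a,b) + (if a = i then s * B $$ (j,b) else 0))"
proof (rule eq_matI)
  fix a b assume ab: "a < dim_row (mat n m (\<lambda>(a,b). B $$ (a,b) + (if a = i then s * B $$ (j,b) else 0)))"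
    "b < dim_col (mat n m (\<lambda>(a,b). B $$ (a,b) + (if a = i then s * B $$ (j,b) else 0)))"
  then have ab': "a < n" "b < m" by auto
  have "(el n i j s * B) $$ (a,b) = (\<Sum>k = 0..<n. el n i j s $$ (a,k) * B $$ (k,b))"
    using ab' B by (simp add: scalar_prod_def)
  also have "\<dots> = (\<Sum>k = 0..<n. (if k = a then B $$ (k,b) else 0) + (if k = j then (if a = i then s * B $$ (k,b) else 0) else 0))"
    using ab' by (intro sum.cong) (auto simp: algebra_simps)
  also have "\<dots> = B $$ (a,b) + (if a = i then s * B $$ (j,b) else 0)"
    using ab' j by (simp add: sum.distrib sum_if_eq)
  finally show "(el n i j s * B) $$ (a,b) = mat n m (\<lambda>(a,b). B $$ (a,b) + (if a = i then s * B $$ (j,b) else 0)) $$ (a,b)"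
    using ab' by simp
qed (use B in auto)

lemma det_el_up: assumes ij: "i < j" "j < n"
  shows "det (el n i j s) = 1"
proof -
  have "upper_triangular (el n i j s)" using ij by (auto simp: upper_triangular_def)
  then have "det (el n i j s) = prod_list (diag_mat (el n i j s))" by (rule det_upper_triangular[OF _ el_carrier])
  also have "diag_mat (el n i j s) = map (\<lambda>_. 1) [0..<n]"
    using ij by (auto simp: diag_mat_def intro!: map_cong)
  finally show ?thesis by (simp add: map_replicate_const prod_list_replicate)
qed

lemma det_el: assumes ij: "i \<noteq> j" "i < n" "j < n"
  shows "det (el n i j s) = 1"
proof (cases "i < j")
  case True then show ?thesis using det_el_up ij by auto
next
  case False
  then have ji: "j < i" using ij by auto
  have "transpose_mat (el n i j s) = el n j i s" by (rule eq_matI) auto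
  then have "det (el n i j s) = det (el n j i s)" using det_transpose[of "el n i j s" n] by simp
  then show ?thesis using det_el_up[OF ji ij(2)] by simp
qed

definition Nd :: "nat \<Rightarrow> nat \<Rightarrow> nat \<Rightarrow> int mat" where
  "Nd n i l = mat n n (\<lambda>(a,b). (if a = i \<and> b = i then 1 else 0) - (if a = i \<and> b = l then 1 else 0)
      + (if a = l \<and> b = i then 1 else 0) - (if a = l \<and> b = l then 1 else 0))"

lemma Nd_carrier[simp]: "Nd n i l \<in> carrier_mat n n" by (simp add: Nd_def)

lemma nd_prod: assumes il: "i \<noteq> l" "i < n" "l < n"
  shows "el n l i 1 * (el n i l (-s) * el n l i (-1)) = 1\<^sub>m n + s \<cdot>\<^sub>m Nd n i l"
proof -
  have "el n i l (-s) * el n l i (-1) = mat n n (\<lambda>(a,b). el n l i (-1) $$ (a,b) + (if a = i then -s * el n l i (-1) $$ (l,b) else 0))"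
    by (rule el_mult) (use il in auto)
  also have "\<dots> = mat n n (\<lambda>(a,b). (if a = b then 1 else 0) - (if a = l \<and> b = i then 1 else 0)
       + (if a = i then -s * ((if l = b then 1 else 0) - (if b = i then 1 else 0)) else 0))"
    by (rule eq_matI) (use il in auto)
  finally have e1: "el n i l (-s) * el n l i (-1) = \<dots>" .
  show ?thesis unfolding e1
    by (subst el_mult) (use il in \<open>auto intro!: eq_matI simp: Nd_def algebra_simps\<close>)
qed

lemma det_nd: assumes il: "i \<noteq> l" "i < n" "l < n"
  shows "det (1\<^sub>m n + s \<cdot>\<^sub>m Nd n i l) = 1"
proof -
  have "det (el n l i 1 * (el n i l (-s) * el n l i (-1))) = 1"
    using det_mult[of _ n] det_el il by (metis el_carrier mult_carrier_mat mult_1 )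
  then show ?thesis using nd_prod[OF il] by simp
qed


lemma prod_first_order:
  fixes f :: "nat \<Rightarrow> int" and r :: int
  assumes "finite S"
  shows "\<exists>k. (\<Prod>i\<in>S. 1 + r * f i) = 1 + r * (\<Sum>i\<in>S. f i) + r * r * k"
  using assms
proof (induction S rule: finite_induct)
  case empty then show ?case by (rule exI[of _ 0]) simp
next
  case (insert x S)
  then obtain k where k: "(\<Prod>i\<in>S. 1 + r * f i) = 1 + r * (\<Sum>i\<in>S. f i) + r * r * k" by blast
  show ?case
    by (rule exI[of _ "f x * (\<Sum>i\<in>S. f i) + k + r * f x * k"]) (use insert k in \<open>simp add: algebra_simps\<close>)
qed

lemma det_first_order:
  fixes Y :: "int mat" and r :: int
  assumes Y: "Y \<in> carrier_mat n n"
  shows "det (1\<^sub>m n + r \<cdot>\<^sub>m Y) mod (r * r) = (1 + r * (\<Sum>a<n. Y $$ (a,a))) mod (r * r)"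
proof -
  let ?M = "1\<^sub>m n + r \<cdot>\<^sub>m Y"
  have M: "?M \<in> carrier_mat n n" using Y by auto
  let ?P = "{f. f permutes {0..<n}}"
  let ?t = "\<lambda>f. signof f * (\<Prod>i = 0..<n. ?M $$ (i, f i))"
  have fin: "finite ?P" by (simp add: finite_permutations)
  have idP: "id \<in> ?P" by (simp add: permutes_id)
  have dv: "r * r dvd ?t f" if f: "f \<in> ?P - {id}" for f
  proof -
    have fp: "f permutes {0..<n}" and fid: "f \<noteq> id" using f by auto
    then obtain i where i: "f i \<noteq> i" by (auto simp: fun_eq_iff)
    have iin: "i < n" using i permutes_not_in[OF fp, of i] by auto
    define j where "j = f i"
    have jin: "j < n" using iin permutes_in_image[OF fp, of i] j_def by auto
    have fj: "f j \<noteq> j"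
    proof
      assume "f j = j"
      then have "f (f i) = f i" using j_def by simp
      then have "f i = i" using permutes_inj[OF fp] by (simp add: inj_eq)
      then show False using i by simp
    qed
    have ij: "i \<noteq> j" using i j_def by simp
    have "(\<Prod>k = 0..<n. ?M $$ (k, f k)) = ?M $$ (i, f i) * (\<Prod>k \<in> {0..<n} - {i}. ?M $$ (k, f k))"
      using iin by (simp add: prod.remove)
    also have "(\<Prod>k \<in> {0..<n} - {i}. ?M $$ (k, f k)) = ?M $$ (j, f j) * (\<Prod>k \<in> {0..<n} - {i} - {j}. ?M $$ (k, f k))"
      by (rule prod.remove) (use jin ij in auto)
    finally have eq: "(\<Prod>k = 0..<n. ?M $$ (k, f k)) = ?M $$ (i, f i) * (?M $$ (j, f j) * (\<Prod>k \<in> {0..<n} - {i} - {j}. ?M $$ (k, f k)))" .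
    have fin': "f i < n" "f j < n" using iin jin permutes_in_image[OF fp, of i] permutes_in_image[OF fp, of j] by auto
    have "?M $$ (i, f i) = r * Y $$ (i, f i)" using i iin fin' Y by simp
    moreover have "?M $$ (j, f j) = r * Y $$ (j, f j)" using fj jin fin' Y by simp
    ultimately show ?thesis unfolding eq by (simp add: mult_dvd_mono)
  qed
  have "det ?M = (\<Sum>f\<in>?P. ?t f)" by (rule det_def'[OF M])
  also have "\<dots> = ?t id + (\<Sum>f\<in>?P - {id}. ?t f)" by (rule sum.remove[OF fin idP])
  finally have "det ?M = ?t id + (\<Sum>f\<in>?P - {id}. ?t f)" .
  moreover have "r * r dvd (\<Sum>f\<in>?P - {id}. ?t f)" by (rule dvd_sum) (use dv in auto)
  then obtain m where m: "(\<Sum>f\<in>?P - {id}. ?t f) = r * r * m" by (auto elim!: dvdE)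
  moreover obtain k where k: "(\<Prod>i\<in>{0..<n}. 1 + r * Y $$ (i,i)) = 1 + r * (\<Sum>i\<in>{0..<n}. Y $$ (i,i)) + r * r * k"
    using prod_first_order[of "{0..<n}" r "\<lambda>i. Y $$ (i,i)"] by auto
  moreover have "?t id = (\<Prod>i\<in>{0..<n}. 1 + r * Y $$ (i,i))" using Y by (simp add: sign_id)
  ultimately have "det ?M = (1 + r * (\<Sum>i\<in>{0..<n}. Y $$ (i,i))) + (r * r) * (k + m)"
    using m by (simp add: algebra_simps)
  then have "det ?M mod (r*r) = (1 + r * (\<Sum>i\<in>{0..<n}. Y $$ (i,i))) mod (r*r)"
    by (simp only: mod_mult_self2)
  also have "\<dots> = (1 + r * (\<Sum>a<n. Y $$ (a,a))) mod (r*r)" by (simp add: atLeast0LessThan)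
  finally show ?thesis .
qed

section \<open>Generators\<close>

definition Bm :: "nat \<Rightarrow> nat \<Rightarrow> int mat" where
  "Bm n c = (if c div n \<noteq> c mod n then Emat n (c div n) (c mod n)
             else Emat n (c div n) (c div n) - Emat n (n-1) (n-1))"

definition gen :: "nat \<Rightarrow> int \<Rightarrow> nat \<Rightarrow> int \<Rightarrow> int mat" where
  "gen n r c t = (if c div n \<noteq> c mod n then el n (c div n) (c mod n) (r*t)
     else (1\<^sub>m n + (r*t) \<cdot>\<^sub>m Nd n (c div n) (n-1)) * el n (c div n) (n-1) (r*t) * el n (n-1) (c div n) (-(r*t)))"

lemma Bm_carrier[simp]: "Bm n c \<in> carrier_mat n n" by (auto simp: Bm_def)
lemma Bm_dim[simp]: "dim_row (Bm n c) = n" "dim_col (Bm n c) = n" by (auto simp: Bm_def)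
lemma gen_carrier[simp]: "gen n r c t \<in> carrier_mat n n"
  unfolding gen_def by (auto intro!: mult_carrier_mat[of _ n n _ n])

lemma coord_facts: fixes c n :: nat assumes c: "c < n*n - 1"
  shows "c div n < n" "c mod n < n" "c div n = c mod n \<Longrightarrow> c div n \<noteq> n - 1"
proof -
  have n: "0 < n" using c by (cases n) auto
  show "c div n < n" using c n by (simp add: div_less_iff_less_mult)
  show "c mod n < n" using n by simp
  show "c div n \<noteq> n - 1" if "c div n = c mod n"
  proof
    assume "c div n = n - 1"
    then have "c = (n-1) * n + (n-1)" using that div_mult_mod_eq[of c n] by simp
    also have "\<dots> = n * n - 1" using n by (cases n) (auto simp: algebra_simps)
    finally show False using c by simp
  qed
qed

lemma gen_det: assumes c: "c < n*n - 1" shows "det (gen n r c t) = 1"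
proof -
  note cf = coord_facts[OF c]
  show ?thesis
  proof (cases "c div n \<noteq> c mod n")
    case True then show ?thesis using det_el cf by (simp add: gen_def)
  next
    case False
    then have ne: "c div n \<noteq> n - 1" using cf by auto
    have nl: "n - 1 < n" using cf by auto
    let ?i = "c div n"
    let ?N = "1\<^sub>m n + (r*t) \<cdot>\<^sub>m Nd n ?i (n-1)" and ?E1 = "el n ?i (n-1) (r*t)" and ?E2 = "el n (n-1) ?i (-(r*t))"
    have cN: "?N \<in> carrier_mat n n" by simp
    have "det (?N * ?E1 * ?E2) = det ?N * det ?E1 * det ?E2"
      using det_mult[OF cN el_carrier, of ?i "n-1" "r*t"] det_mult[OF mult_carrier_mat[OF cN el_carrier] el_carrier, of ?i "n-1" "r*t" "n-1" ?i "-(r*t)"]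
      by simp
    also have "\<dots> = 1" using det_el[of ?i "n-1" n] det_el[of "n-1" ?i n] det_nd[OF ne cf(1) nl] ne cf(1) nl by simp
    finally have "det (?N * ?E1 * ?E2) = 1" .
    then show ?thesis using False by (simp add: gen_def)
  qed
qed

lemma gen_cong: assumes c: "c < n*n - 1"
  shows "red_mat (r*r) (gen n r c t) = red_mat (r*r) (1\<^sub>m n + r \<cdot>\<^sub>m (t \<cdot>\<^sub>m Bm n c))"
proof -
  note cf = coord_facts[OF c]
  show ?thesis
  proof (cases "c div n \<noteq> c mod n")
    case True
    have "gen n r c t = 1\<^sub>m n + r \<cdot>\<^sub>m (t \<cdot>\<^sub>m Bm n c)"
      using True by (auto simp: gen_def Bm_def el_def intro!: eq_matI)
    then show ?thesis by simp
  next
    case False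
    then have ne: "c div n \<noteq> n - 1" using cf by auto
    have nl: "n - 1 < n" using cf by auto
    let ?i = "c div n" and ?l = "n - 1"
    have e1: "1\<^sub>m n + (r*t) \<cdot>\<^sub>m Nd n ?i ?l = 1\<^sub>m n + r \<cdot>\<^sub>m (t \<cdot>\<^sub>m Nd n ?i ?l)"
      by (auto intro!: eq_matI)
    have e2: "el n ?i ?l (r*t) = 1\<^sub>m n + r \<cdot>\<^sub>m (t \<cdot>\<^sub>m Emat n ?i ?l)"
      by (auto simp: el_def intro!: eq_matI)
    have e3: "el n ?l ?i (-(r*t)) = 1\<^sub>m n + r \<cdot>\<^sub>m ((-t) \<cdot>\<^sub>m Emat n ?l ?i)"
      by (auto simp: el_def intro!: eq_matI)
    have s1: "red_mat (r*r) ((1\<^sub>m n + r \<cdot>\<^sub>m (t \<cdot>\<^sub>m Nd n ?i ?l)) * (1\<^sub>m n + r \<cdot>\<^sub>m (t \<cdot>\<^sub>m Emat n ?i ?l)))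
        = red_mat (r*r) (1\<^sub>m n + r \<cdot>\<^sub>m (t \<cdot>\<^sub>m Nd n ?i ?l + t \<cdot>\<^sub>m Emat n ?i ?l))"
      by (rule CP[of _ n]) auto
    have "red_mat (r*r) ((1\<^sub>m n + r \<cdot>\<^sub>m (t \<cdot>\<^sub>m Nd n ?i ?l)) * (1\<^sub>m n + r \<cdot>\<^sub>m (t \<cdot>\<^sub>m Emat n ?i ?l))
           * (1\<^sub>m n + r \<cdot>\<^sub>m ((-t) \<cdot>\<^sub>m Emat n ?l ?i)))
        = red_mat (r*r) (1\<^sub>m n + r \<cdot>\<^sub>m ((t \<cdot>\<^sub>m Nd n ?i ?l + t \<cdot>\<^sub>m Emat n ?i ?l) + (-t) \<cdot>\<^sub>m Emat n ?l ?i))"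
      by (rule CP[OF _ _ _ _ s1]) (auto intro!: mult_carrier_mat[of _ n n _ n])
    then have "red_mat (r*r) ((1\<^sub>m n + (r*t) \<cdot>\<^sub>m Nd n ?i ?l) * el n ?i ?l (r*t) * el n ?l ?i (-(r*t)))
        = red_mat (r*r) (1\<^sub>m n + r \<cdot>\<^sub>m ((t \<cdot>\<^sub>m Nd n ?i ?l + t \<cdot>\<^sub>m Emat n ?i ?l) + (-t) \<cdot>\<^sub>m Emat n ?l ?i))"
      unfolding e1 e2 e3 .
    also have "(t \<cdot>\<^sub>m Nd n ?i ?l + t \<cdot>\<^sub>m Emat n ?i ?l) + (-t) \<cdot>\<^sub>m Emat n ?l ?i = t \<cdot>\<^sub>m Bm n c"
      using False ne by (auto simp: Bm_def Nd_def intro!: eq_matI)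
    finally show ?thesis using False by (simp add: gen_def)
  qed
qed

definition genprod :: "nat \<Rightarrow> int \<Rightarrow> (nat \<Rightarrow> int) \<Rightarrow> nat list \<Rightarrow> int mat" where
  "genprod n r v cs = foldr (\<lambda>c M. gen n r c (v c) * M) cs (1\<^sub>m n)"

definition BS :: "nat \<Rightarrow> (nat \<Rightarrow> int) \<Rightarrow> nat list \<Rightarrow> int mat" where
  "BS n v cs = foldr (\<lambda>c S. v c \<cdot>\<^sub>m Bm n c + S) cs (0\<^sub>m n n)"

lemma BS_carrier[simp]: "BS n v cs \<in> carrier_mat n n"
  by (induction cs) (auto simp: BS_def)
lemma BS_dim[simp]: "dim_row (BS n v cs) = n" "dim_col (BS n v cs) = n"
  using BS_carrier[of n v cs] unfolding carrier_mat_def by auto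
lemma BS_Nil: "BS n v [] = 0\<^sub>m n n" by (simp add: BS_def)
lemma BS_Cons: "BS n v (c # cs) = v c \<cdot>\<^sub>m Bm n c + BS n v cs" by (simp add: BS_def)

lemma genprod_props: assumes "set cs \<subseteq> {..<n*n-1}"
  shows "genprod n r v cs \<in> carrier_mat n n \<and> det (genprod n r v cs) = 1 \<and>
    red_mat (r*r) (genprod n r v cs) = red_mat (r*r) (1\<^sub>m n + r \<cdot>\<^sub>m BS n v cs)"
  using assms
proof (induction cs)
  case Nil
  have "1\<^sub>m n + r \<cdot>\<^sub>m 0\<^sub>m n n = (1\<^sub>m n :: int mat)" by (auto intro!: eq_matI)
  then show ?case by (simp add: genprod_def BS_def)
next
  case (Cons c cs)
  then have IH: "genprod n r v cs \<in> carrier_mat n n" "det (genprod n r v cs) = 1"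
    "red_mat (r*r) (genprod n r v cs) = red_mat (r*r) (1\<^sub>m n + r \<cdot>\<^sub>m BS n v cs)" and c: "c < n*n-1" by auto
  have gp: "genprod n r v (c # cs) = gen n r c (v c) * genprod n r v cs" by (simp add: genprod_def)
  have bs: "BS n v (c # cs) = v c \<cdot>\<^sub>m Bm n c + BS n v cs" by (simp add: BS_def)
  have "red_mat (r*r) (gen n r c (v c) * genprod n r v cs) = red_mat (r*r) (1\<^sub>m n + r \<cdot>\<^sub>m (v c \<cdot>\<^sub>m Bm n c + BS n v cs))"
    by (rule CP[of _ n]) (use IH gen_cong[OF c] in auto)
  moreover have "det (gen n r c (v c) * genprod n r v cs) = 1" using det_mult[OF gen_carrier IH(1)] IH(2) gen_det[OF c] by simp
  ultimately show ?case using gp bs IH mult_carrier_mat[OF gen_carrier IH(1)] by simp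
qed

lemma BS_index: assumes "a < n" "b < n"
  shows "BS n v cs $$ (a,b) = (\<Sum>c\<leftarrow>cs. v c * Bm n c $$ (a,b))"
  using assms by (induction cs) (auto simp: BS_Nil BS_Cons)

lemma div_mod_eq_iff: fixes a b c n :: nat assumes "b < n" shows "(c = a*n + b) \<longleftrightarrow> (c div n = a \<and> c mod n = b)"
proof
  assume "c = a*n + b" then show "c div n = a \<and> c mod n = b" using assms by simp
next
  assume "c div n = a \<and> c mod n = b" then show "c = a*n + b" using div_mult_mod_eq[of c n] by simp
qed

lemma Bm_index: fixes a b c n :: nat assumes c: "c < n*n - 1" and ab: "a < n" "b < n" "\<not> (a = n-1 \<and> b = n-1)"
  shows "Bm n c $$ (a,b) = (if c = a*n+b then 1 else 0)"
  using coord_facts[OF c] ab div_mod_eq_iff[OF ab(2), of c a] by (auto simp: Bm_def)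

lemma Bm_trace: assumes c: "c < n*n - 1"
  shows "(\<Sum>a<n. Bm n c $$ (a,a)) = 0"
proof (cases "c div n \<noteq> c mod n")
  case True then show ?thesis using coord_facts[OF c] by (auto simp: Bm_def intro!: sum.neutral)
next
  case False
  have nl: "n - 1 < n" using coord_facts[OF c] by auto
  have "(\<Sum>a<n. Bm n c $$ (a,a)) = (\<Sum>a<n. (if a = c div n then 1 else 0) - (if a = n - 1 then 1 else 0))"
    using False by (intro sum.cong) (auto simp: Bm_def)
  also have "\<dots> = 0" using coord_facts[OF c] nl by (simp add: sum_subtractf)
  finally show ?thesis .
qed

lemma BS_coord: fixes a b n :: nat assumes ab: "a < n" "b < n" "\<not> (a = n-1 \<and> b = n-1)"
  shows "BS n v [0..<n*n-1] $$ (a,b) = v (a*n+b)"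
proof -
  have lt: "a*n + b < n*n - 1"
  proof -
    have "a*n + b \<le> (n-1)*n + (n-1)" using ab by (intro add_le_mono mult_le_mono1) auto
    moreover have "a*n + b \<noteq> (n-1)*n + (n-1)"
    proof
      assume eq: "a*n + b = (n-1)*n + (n-1)"
      have n1: "n - 1 < n" using ab by auto
      have "(a*n+b) div n = a \<and> (a*n+b) mod n = b" using div_mod_eq_iff[OF ab(2), of "a*n+b" a] by simp
      moreover have "(a*n+b) div n = n-1 \<and> (a*n+b) mod n = n-1" using div_mod_eq_iff[OF n1, of "a*n+b" "n-1"] eq by simp
      ultimately show False using ab(3) by simp
    qed
    moreover have "(n-1)*n + (n-1) = n*n - 1" using ab by (cases n) (auto simp: algebra_simps)
    ultimately show ?thesis by linarith
  qed
  have "BS n v [0..<n*n-1] $$ (a,b) = (\<Sum>c\<in>{0..<n*n-1}. v c * Bm n c $$ (a,b))"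
    using BS_index[OF ab(1,2)] by (simp add: sum_set_upt_conv_sum_list_nat[symmetric])
  also have "\<dots> = (\<Sum>c\<in>{0..<n*n-1}. if c = a*n+b then v c else 0)"
    using Bm_index ab by (intro sum.cong) auto
  also have "\<dots> = v (a*n+b)" using lt by simp
  finally show ?thesis .
qed

lemma BS_trace: "(\<Sum>a<n. BS n v [0..<n*n-1] $$ (a,a)) = 0"
proof -
  have "(\<Sum>a<n. BS n v [0..<n*n-1] $$ (a,a)) = (\<Sum>a<n. \<Sum>c\<in>{0..<n*n-1}. v c * Bm n c $$ (a,a))"
    using BS_index by (intro sum.cong) (auto simp: sum_set_upt_conv_sum_list_nat[symmetric])
  also have "\<dots> = (\<Sum>c\<in>{0..<n*n-1}. v c * (\<Sum>a<n. Bm n c $$ (a,a)))"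
    by (subst sum.swap) (simp add: sum_distrib_left)
  also have "\<dots> = 0" using Bm_trace by simp
  finally show ?thesis .
qed


context slp
begin

definition K :: "nat \<Rightarrow> (nat \<Rightarrow> int mat) set" where
  "K k = {x \<in> carrier G. x k = \<one>\<^bsub>G\<^esub> k}"

definition iota :: "int mat \<Rightarrow> nat \<Rightarrow> int mat" where
  "iota M = (\<lambda>k. red_mat (int p ^ k) M)"

lemma lev_mult: "(x \<otimes>\<^bsub>G\<^esub> y) k = red_mat (int p ^ k) (x k * y k)"
  by (simp add: mult_G)

lemma lev_cong: "x k = x' k \<Longrightarrow> y k = y' k \<Longrightarrow> (x \<otimes>\<^bsub>G\<^esub> y) k = (x' \<otimes>\<^bsub>G\<^esub> y') k"
  by (simp add: lev_mult)

lemma one_lev: assumes "1 \<le> k" shows "\<one>\<^bsub>G\<^esub> k = 1\<^sub>m d"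
proof -
  have "int p ^ k \<ge> int p ^ 1" using assms p2 by (intro power_increasing) auto
  moreover have "int p ^ 1 \<ge> 2" using p2 by simp
  ultimately have q: "int p ^ k \<ge> 2" by linarith
  show ?thesis unfolding one_G by (rule red_id) (use q p2 in auto)
qed

lemma one_lev_red: "\<one>\<^bsub>G\<^esub> k = red_mat (int p ^ k) (1\<^sub>m d)" by (simp add: one_G)

lemma K_eq: assumes x: "x \<in> carrier G" and y: "y \<in> carrier G" and e: "x k = y k"
  shows "inv\<^bsub>G\<^esub> x \<otimes>\<^bsub>G\<^esub> y \<in> K k" "y \<otimes>\<^bsub>G\<^esub> inv\<^bsub>G\<^esub> x \<in> K k"
proof -
  have "(inv\<^bsub>G\<^esub> x \<otimes>\<^bsub>G\<^esub> y) k = (inv\<^bsub>G\<^esub> x \<otimes>\<^bsub>G\<^esub> x) k" by (rule lev_cong) (use e in auto)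
  then show "inv\<^bsub>G\<^esub> x \<otimes>\<^bsub>G\<^esub> y \<in> K k" using x y by (simp add: K_def)
  have "(y \<otimes>\<^bsub>G\<^esub> inv\<^bsub>G\<^esub> x) k = (x \<otimes>\<^bsub>G\<^esub> inv\<^bsub>G\<^esub> x) k" by (rule lev_cong) (use e in auto)
  then show "y \<otimes>\<^bsub>G\<^esub> inv\<^bsub>G\<^esub> x \<in> K k" using x y by (simp add: K_def)
qed

lemma K_sub: "subgroup (K k) G"
proof (rule grp.subgroupI)
  show "K k \<subseteq> carrier G" by (auto simp: K_def)
  show "K k \<noteq> {}" using one_closed by (auto simp: K_def)
next
  fix a assume a: "a \<in> K k"
  then have ac: "a \<in> carrier G" and ak: "a k = \<one>\<^bsub>G\<^esub> k" by (auto simp: K_def)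
  have "(inv\<^bsub>G\<^esub> a \<otimes>\<^bsub>G\<^esub> \<one>\<^bsub>G\<^esub>) k = (inv\<^bsub>G\<^esub> a \<otimes>\<^bsub>G\<^esub> a) k" by (rule lev_cong) (use ak in auto)
  then show "inv\<^bsub>G\<^esub> a \<in> K k" using ac by (simp add: K_def)
next
  fix a b assume a: "a \<in> K k" and b: "b \<in> K k"
  then have "(a \<otimes>\<^bsub>G\<^esub> b) k = (\<one>\<^bsub>G\<^esub> \<otimes>\<^bsub>G\<^esub> \<one>\<^bsub>G\<^esub>) k" by (intro lev_cong) (auto simp: K_def)
  then show "a \<otimes>\<^bsub>G\<^esub> b \<in> K k" using a b by (auto simp: K_def)
qed

lemma K_mono: assumes "j \<le> k" shows "K k \<subseteq> K j"
proof
  fix x assume x: "x \<in> K k"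
  then have xc: "x \<in> carrier G" and xk: "x k = \<one>\<^bsub>G\<^esub> k" by (auto simp: K_def)
  have "x j = red_mat (int p ^ j) (x k)" using G_lower[OF xc assms] by simp
  also have "\<dots> = red_mat (int p ^ j) (red_mat (int p ^ k) (1\<^sub>m d))" using xk by (simp add: one_G)
  also have "\<dots> = \<one>\<^bsub>G\<^esub> j" unfolding one_G by (rule red_red) (use assms in \<open>simp add: le_imp_power_dvd\<close>)
  finally show "x \<in> K j" using xc by (simp add: K_def)
qed

lemma iota_closed: assumes M: "M \<in> carrier_mat d d" and dM: "det M = 1"
  shows "iota M \<in> carrier G"
  unfolding G_mem iota_def
proof (rule allI, intro conjI)
  fix k
  show "red_mat (int p ^ k) M \<in> carrier_mat d d" using M by simp
  show "\<forall>i<d. \<forall>j<d. 0 \<le> red_mat (int p ^ k) M $$ (i, j) \<and> red_mat (int p ^ k) M $$ (i, j) < int p ^ k"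
    using M qpos[of k] by auto
  show "det (red_mat (int p ^ k) M) mod int p ^ k = 1 mod int p ^ k" using red_det_mod[OF M] dM by simp
  show "red_mat (int p ^ k) (red_mat (int p ^ Suc k) M) = red_mat (int p ^ k) M"
    by (rule red_red) (simp add: le_imp_power_dvd)
qed

lemma iota_mult: assumes M: "M \<in> carrier_mat d d" and N: "N \<in> carrier_mat d d"
  shows "iota M \<otimes>\<^bsub>G\<^esub> iota N = iota (M * N)"
  unfolding mult_G iota_def using red_mult M N by (metis carrier_matD(1) carrier_matD(2))

lemma iota_one: "iota (1\<^sub>m d) = \<one>\<^bsub>G\<^esub>" by (simp add: iota_def one_G)

lemma iota_pow: assumes M: "M \<in> carrier_mat d d"
  shows "iota M [^]\<^bsub>G\<^esub> j = iota (M ^\<^sub>m j)"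
proof (induction j)
  case 0 then show ?case using M iota_one by simp
next
  case (Suc j) then show ?case using M iota_mult[of "M ^\<^sub>m j" M] by simp
qed

lemma sub_pow_closed: assumes H: "subgroup H G" and x: "x \<in> H" shows "x [^]\<^bsub>G\<^esub> (n::nat) \<in> H"
proof (induction n)
  case 0 then show ?case using subgroup.one_closed[OF H] by simp
next
  case (Suc n) then show ?case using subgroup.m_closed[OF H] x by simp
qed

end

lemma pe_decomp: fixes p :: nat assumes "2 \<le> p" "0 < N"
  shows "\<exists>e u. N = p^e * u \<and> \<not> p dvd u"
  using assms(2)
proof (induction N rule: less_induct)
  case (less N)
  show ?case
  proof (cases "p dvd N")
    case False then show ?thesis by (rule_tac x=0 in exI) auto
  next
    case True
    then obtain N' where N': "N = p * N'" by blast
    then have "0 < N'" "N' < N" using less.prems assms(1) by auto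
    then obtain e u where "N' = p^e * u" "\<not> p dvd u" using less.IH by blast
    then show ?thesis using N' by (rule_tac x="Suc e" in exI) auto
  qed
qed


lemma inverse_mod: fixes p u :: nat assumes pr: "prime p" and nd: "\<not> p dvd u"
  shows "\<exists>x::nat. int p dvd int u * int x - 1"
proof -
  have u0: "u \<noteq> 0"
  proof
    assume "u = 0" then show False using nd by simp
  qed
  have "coprime p u" using prime_imp_coprime[OF pr nd] .
  then have g: "gcd u p = 1" by (simp add: coprime_commute)
  obtain x y where "u * x = p * y + gcd u p" using bezout_nat[OF u0, of p] by blast
  then have "u * x = p * y + 1" using g by simp
  then have "int (u * x) = int (p * y + 1)" by simp
  then have "int u * int x - 1 = int p * int y" by simp
  then have "int p dvd int u * int x - 1" by simp
  then show ?thesis by blast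
qed

context slp
begin

lemma descent:
  assumes pr: "prime p" and H: "subgroup H G" and N: "N = p^e * u" "\<not> p dvd u"
  and pw: "\<And>x. x \<in> carrier G \<Longrightarrow> x [^]\<^bsub>G\<^esub> N \<in> H"
  and l: "e + 2 \<le> l" and Kl: "K (Suc l) \<subseteq> H"
  shows "K l \<subseteq> H"
proof
  fix y assume yK: "y \<in> K l"
  then have yc: "y \<in> carrier G" and yl: "y l = \<one>\<^bsub>G\<^esub> l" by (auto simp: K_def)
  let ?q1 = "int p ^ Suc l" and ?r = "int p ^ l"
  have l1: "1 \<le> l" using l by simp
  have ys: "y (Suc l) \<in> carrier_mat d d" using G_car[OF yc] .
  have "red_mat ?r (y (Suc l)) = red_mat ?r (1\<^sub>m d)"
    using G_suc[OF yc, of l] yl one_lev_red[of l] by simp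
  then obtain Y where Y: "Y \<in> carrier_mat d d" and yY: "y (Suc l) = 1\<^sub>m d + ?r \<cdot>\<^sub>m Y"
    using cong_exact[OF ys, of "1\<^sub>m d" ?r] by auto
  have dvq: "?q1 dvd ?r * ?r"
  proof -
    have "Suc l \<le> l + l" using l1 by simp
    then have "int p ^ Suc l dvd int p ^ (l + l)" by (rule le_imp_power_dvd)
    then show ?thesis by (simp add: power_add)
  qed
  have "det (y (Suc l)) mod ?q1 = 1 mod ?q1" using G_det[OF yc] .
  moreover have "det (y (Suc l)) mod ?q1 = (1 + ?r * (\<Sum>a<d. Y $$ (a,a))) mod ?q1"
  proof -
    have "det (y (Suc l)) mod (?r * ?r) = (1 + ?r * (\<Sum>a<d. Y $$ (a,a))) mod (?r * ?r)"
      using det_first_order[OF Y, of ?r] yY by simp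
    then have "(det (y (Suc l)) mod (?r * ?r)) mod ?q1 = ((1 + ?r * (\<Sum>a<d. Y $$ (a,a))) mod (?r * ?r)) mod ?q1"
      by simp
    then show ?thesis by (simp only: mod_mod_cancel[OF dvq])
  qed
  ultimately have "(1 + ?r * (\<Sum>a<d. Y $$ (a,a))) mod ?q1 = 1 mod ?q1" by simp
  then have "?q1 dvd (1 + ?r * (\<Sum>a<d. Y $$ (a,a))) - 1" by (simp only: mod_eq_dvd_iff)
  then have "?q1 dvd ?r * (\<Sum>a<d. Y $$ (a,a))" by simp
  then have htr: "int p dvd (\<Sum>a<d. Y $$ (a,a))" using p2 by (simp add: mult.commute)
  obtain x where hx: "int p dvd int u * int x - 1" using inverse_mod[OF pr N(2)] by blast
  define t where "t c = int x * Y $$ (c div d, c mod d)" for c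
  define s0 where "s0 = l - e"
  have s0: "2 \<le> s0" "s0 + e = l" using l by (auto simp: s0_def)
  let ?P = "int p ^ s0"
  let ?M = "genprod d ?P t [0..<d*d-1]"
  let ?B = "BS d t [0..<d*d-1]"
  have gp: "?M \<in> carrier_mat d d" "det ?M = 1" "red_mat (?P * ?P) ?M = red_mat (?P * ?P) (1\<^sub>m d + ?P \<cdot>\<^sub>m ?B)"
    using genprod_props[of "[0..<d*d-1]" d ?P t] by (auto simp: atLeast0LessThan)
  obtain C where C: "C \<in> carrier_mat d d" and MC: "?M = (1\<^sub>m d + ?P \<cdot>\<^sub>m ?B) + (?P * ?P) \<cdot>\<^sub>m C"
    using cong_exact[OF gp(1) _ gp(3)] by auto
  define Z1 where "Z1 = ?B + ?P \<cdot>\<^sub>m C"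
  have Z1c: "Z1 \<in> carrier_mat d d" using C by (simp add: Z1_def)
  have MZ1: "?M = 1\<^sub>m d + ?P \<cdot>\<^sub>m Z1"
    unfolding MC Z1_def by (rule eq_matI) (use C in \<open>auto simp: algebra_simps\<close>)
  have Z1B: "red_mat (int p) Z1 = red_mat (int p) ?B"
  proof (rule eq_matI)
    fix i j assume ij: "i < dim_row (red_mat (int p) ?B)" "j < dim_col (red_mat (int p) ?B)"
    then have ij': "i < d" "j < d" by auto
    obtain s1 where "s0 = Suc s1" using s0 by (cases s0) auto
    then have "?P = int p * int p ^ (s0 - 1)" by simp
    then have "(?B $$ (i,j) + ?P * C $$ (i,j)) mod int p = ?B $$ (i,j) mod int p" by (simp add: mult.assoc)
    then show "red_mat (int p) Z1 $$ (i, j) = red_mat (int p) ?B $$ (i, j)" using ij' C by (simp add: Z1_def)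
  qed (use Z1c in auto)
  obtain Z2 where Z2: "Z2 \<in> carrier_mat d d" "(1\<^sub>m d + ?P \<cdot>\<^sub>m Z1) ^\<^sub>m (p^e) = 1\<^sub>m d + (int p)^(s0 + e) \<cdot>\<^sub>m Z2"
    "red_mat (int p) Z2 = red_mat (int p) Z1"
    using exact_pe[OF Z1c s0(1), of p e] by blast
  have Mpe: "?M ^\<^sub>m (p^e) = 1\<^sub>m d + ?r \<cdot>\<^sub>m Z2" using Z2 MZ1 s0 by simp
  have "red_mat (?r * ?r) ((?M ^\<^sub>m (p^e)) ^\<^sub>m u) = red_mat (?r * ?r) (1\<^sub>m d + ?r \<cdot>\<^sub>m (int u \<cdot>\<^sub>m Z2))"
    by (rule pow_cong) (use Mpe Z2 gp in auto)
  moreover have "?M ^\<^sub>m N = (?M ^\<^sub>m (p^e)) ^\<^sub>m u" using pow_mat_mult[OF gp(1)] N(1) by simp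
  ultimately have MN: "red_mat ?q1 (?M ^\<^sub>m N) = red_mat ?q1 (1\<^sub>m d + ?r \<cdot>\<^sub>m (int u \<cdot>\<^sub>m Z2))"
    using red_red[OF dvq, of "?M ^\<^sub>m N"] red_red[OF dvq, of "1\<^sub>m d + ?r \<cdot>\<^sub>m (int u \<cdot>\<^sub>m Z2)"] by simp
  have BY: "int p dvd int u * ?B $$ (a,b) - Y $$ (a,b)" if ab: "a < d" "b < d" for a b
  proof (cases "a = d - 1 \<and> b = d - 1")
    case False
    have "?B $$ (a,b) = t (a*d+b)" using BS_coord[OF ab False] .
    also have "\<dots> = int x * Y $$ (a,b)" using ab by (simp add: t_def)
    finally have "int u * ?B $$ (a,b) - Y $$ (a,b) = (int u * int x - 1) * Y $$ (a,b)" by (simp add: algebra_simps)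
    then show ?thesis using hx by simp
  next
    case True
    then have ab': "a = d - 1" "b = d - 1" by auto
    obtain d' where dS: "d = Suc d'" using ab by (cases d) auto
    have "(\<Sum>a<d. ?B $$ (a,a)) = 0" by (rule BS_trace)
    moreover have "(\<Sum>a<d. ?B $$ (a,a)) = (\<Sum>a<d-1. ?B $$ (a,a)) + ?B $$ (d-1,d-1)"
      unfolding dS by simp
    ultimately have s1: "?B $$ (d-1,d-1) = - (\<Sum>a<d-1. ?B $$ (a,a))" by simp
    have s2: "(\<Sum>a<d-1. ?B $$ (a,a)) = (\<Sum>a<d-1. int x * Y $$ (a,a))"
    proof (rule sum.cong)
      fix a assume "a \<in> {..<d-1}"
      then have a: "a < d" "a \<noteq> d - 1" by auto
      then have "?B $$ (a,a) = t (a*d+a)" using BS_coord[of a d a t] by auto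
      then show "?B $$ (a,a) = int x * Y $$ (a,a)" using a by (simp add: t_def)
    qed simp
    have s3: "(\<Sum>a<d. Y $$ (a,a)) = (\<Sum>a<d-1. Y $$ (a,a)) + Y $$ (d-1,d-1)"
      unfolding dS by simp
    define S' where "S' = (\<Sum>a<d-1. Y $$ (a,a))"
    define T where "T = (\<Sum>a<d. Y $$ (a,a))"
    have e1: "(\<Sum>a<d-1. int x * Y $$ (a,a)) = int x * S'" unfolding S'_def by (simp add: sum_distrib_left)
    have bl: "?B $$ (d-1,d-1) = - (int x * S')" using s1 s2 e1 by simp
    have yl: "Y $$ (d-1,d-1) = T - S'" using s3 unfolding S'_def T_def by simp
    have "int u * ?B $$ (d-1,d-1) - Y $$ (d-1,d-1) = - ((int u * int x - 1) * S') - T"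
      unfolding bl yl by (simp add: algebra_simps)
    then have eqB: "int u * ?B $$ (d-1,d-1) - Y $$ (d-1,d-1) = - ((int u * int x - 1) * (\<Sum>a<d-1. Y $$ (a,a))) - (\<Sum>a<d. Y $$ (a,a))"
      unfolding S'_def T_def .
    have dv1: "int p dvd (int u * int x - 1) * (\<Sum>a<d-1. Y $$ (a,a))" using hx by simp
    have dv2: "int p dvd - ((int u * int x - 1) * (\<Sum>a<d-1. Y $$ (a,a)))"
      using dv1 by (simp only: dvd_minus_iff)
    have "int p dvd - ((int u * int x - 1) * (\<Sum>a<d-1. Y $$ (a,a))) - (\<Sum>a<d. Y $$ (a,a))"
      using dv2 htr by (rule dvd_diff)
    then show ?thesis using ab' eqB by simp
  qed
  have key: "red_mat ?q1 (1\<^sub>m d + ?r \<cdot>\<^sub>m (int u \<cdot>\<^sub>m Z2)) = y (Suc l)"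
  proof -
    have "red_mat ?q1 (1\<^sub>m d + ?r \<cdot>\<^sub>m (int u \<cdot>\<^sub>m Z2)) = red_mat ?q1 (1\<^sub>m d + ?r \<cdot>\<^sub>m Y)"
    proof (rule eq_matI)
      fix a b assume ab: "a < dim_row (red_mat ?q1 (1\<^sub>m d + ?r \<cdot>\<^sub>m Y))" "b < dim_col (red_mat ?q1 (1\<^sub>m d + ?r \<cdot>\<^sub>m Y))"
      then have ab': "a < d" "b < d" using Y by auto
      have "Z2 $$ (a,b) mod int p = Z1 $$ (a,b) mod int p" using red_eqD[OF Z2(3)] ab' Z2(1) by auto
      also have "\<dots> = ?B $$ (a,b) mod int p" using red_eqD[OF Z1B] ab' Z1c by auto
      finally have "int p dvd Z2 $$ (a,b) - ?B $$ (a,b)" by (simp add: mod_eq_dvd_iff)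
      then have "int p dvd int u * (Z2 $$ (a,b) - ?B $$ (a,b))" by simp
      then have "int p dvd (int u * (Z2 $$ (a,b) - ?B $$ (a,b))) + (int u * ?B $$ (a,b) - Y $$ (a,b))"
        using BY[OF ab'] by (rule dvd_add)
      then have "int p dvd int u * Z2 $$ (a,b) - Y $$ (a,b)" by (simp add: algebra_simps)
      then have "?r * int p dvd ?r * (int u * Z2 $$ (a,b) - Y $$ (a,b))" by simp
      then have "?q1 dvd (?r * (int u * Z2 $$ (a,b))) - (?r * Y $$ (a,b))" by (simp add: algebra_simps)
      then have "((if a = b then 1 else 0) + ?r * (int u * Z2 $$ (a,b))) mod ?q1 = ((if a = b then 1 else 0) + ?r * Y $$ (a,b)) mod ?q1"
        by (simp add: mod_eq_dvd_iff)
      then show "red_mat ?q1 (1\<^sub>m d + ?r \<cdot>\<^sub>m (int u \<cdot>\<^sub>m Z2)) $$ (a, b) = red_mat ?q1 (1\<^sub>m d + ?r \<cdot>\<^sub>m Y) $$ (a, b)"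
        using ab' Y Z2(1) by simp
    qed (use Y Z2 in auto)
    also have "\<dots> = y (Suc l)" using yY G_red_self[OF yc, of "Suc l"] by simp
    finally show ?thesis .
  qed
  define z where "z = iota ?M"
  have zc: "z \<in> carrier G" using iota_closed gp z_def by auto
  have zN: "z [^]\<^bsub>G\<^esub> N = iota (?M ^\<^sub>m N)" using iota_pow[OF gp(1)] z_def by simp
  have zNc: "z [^]\<^bsub>G\<^esub> N \<in> carrier G" using zc by simp
  have "(z [^]\<^bsub>G\<^esub> N) (Suc l) = y (Suc l)" using zN MN key by (simp add: iota_def)
  then have "inv\<^bsub>G\<^esub> (z [^]\<^bsub>G\<^esub> N) \<otimes>\<^bsub>G\<^esub> y \<in> K (Suc l)" using K_eq[OF zNc yc] by simp
  then have h1: "inv\<^bsub>G\<^esub> (z [^]\<^bsub>G\<^esub> N) \<otimes>\<^bsub>G\<^esub> y \<in> H" using Kl by auto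
  have h2: "z [^]\<^bsub>G\<^esub> N \<in> H" using pw[OF zc] .
  have "z [^]\<^bsub>G\<^esub> N \<otimes>\<^bsub>G\<^esub> (inv\<^bsub>G\<^esub> (z [^]\<^bsub>G\<^esub> N) \<otimes>\<^bsub>G\<^esub> y) \<in> H"
    using subgroup.m_closed[OF H h2 h1] .
  moreover have "z [^]\<^bsub>G\<^esub> N \<otimes>\<^bsub>G\<^esub> (inv\<^bsub>G\<^esub> (z [^]\<^bsub>G\<^esub> N) \<otimes>\<^bsub>G\<^esub> y) = y"
    using zNc yc by (simp add: grp.m_assoc[symmetric])
  ultimately show "y \<in> H" by simp
qed

end

definition matset :: "nat \<Rightarrow> int \<Rightarrow> int mat set" where
  "matset n q = {M \<in> carrier_mat n n. \<forall>i<n. \<forall>j<n. 0 \<le> M $$ (i,j) \<and> M $$ (i,j) < q}"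

lemma matset_card: "finite (matset n q) \<and> card (matset n q) \<le> nat q ^ (n*n)"
proof -
  let ?I = "{..<n} \<times> {..<n}"
  let ?F = "PiE ?I (\<lambda>_. {0..<q})"
  have sub: "matset n q \<subseteq> (\<lambda>F. mat n n F) ` ?F"
  proof
    fix M assume M: "M \<in> matset n q"
    let ?f = "restrict (\<lambda>ij. M $$ ij) ?I"
    have "?f \<in> ?F" using M by (auto simp: matset_def)
    moreover have "M = mat n n ?f" using M by (auto simp: matset_def intro!: eq_matI)
    ultimately show "M \<in> (\<lambda>F. mat n n F) ` ?F" by blast
  qed
  have fF: "finite ?F" by (rule finite_PiE) auto
  have cF: "card ?F = nat q ^ (n*n)"
    by (simp add: card_PiE card_cartesian_product)
  have "finite (matset n q)" using finite_subset[OF sub] fF by blast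
  moreover have "card (matset n q) \<le> card ((\<lambda>F. mat n n F) ` ?F)" by (rule card_mono[OF _ sub]) (use fF in auto)
  moreover have "card ((\<lambda>F. mat n n F) ` ?F) \<le> card ?F" by (rule card_image_le[OF fF])
  ultimately show ?thesis using cF by simp
qed

context slp
begin

lemma lev_matset: "x \<in> carrier G \<Longrightarrow> x k \<in> matset d (int p ^ k)"
  using G_car G_range by (auto simp: matset_def)

lemma pow_in:
  assumes H: "subgroup H G" and fin: "finite (rcosets\<^bsub>G\<^esub> H)" and cn: "card (rcosets\<^bsub>G\<^esub> H) \<le> n"
  and x: "x \<in> carrier G"
  shows "x [^]\<^bsub>G\<^esub> (fact n :: nat) \<in> H"
proof -
  have Hs: "H \<subseteq> carrier G" using subgroup.subset[OF H] .
  let ?f = "\<lambda>i::nat. H #>\<^bsub>G\<^esub> (x [^]\<^bsub>G\<^esub> i)"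
  have img: "?f ` {0..n} \<subseteq> rcosets\<^bsub>G\<^esub> H" using grp.rcosetsI[OF Hs] x by auto
  have "card (?f ` {0..n}) \<le> card (rcosets\<^bsub>G\<^esub> H)" by (rule card_mono[OF fin img])
  then have "card (?f ` {0..n}) < card {0..n}" using cn by simp
  then have "\<not> inj_on ?f {0..n}" by (rule pigeonhole)
  then obtain i j where ij: "i \<in> {0..n}" "j \<in> {0..n}" "i \<noteq> j" "?f i = ?f j"
    unfolding inj_on_def by blast
  have main: "x [^]\<^bsub>G\<^esub> (fact n :: nat) \<in> H" if ij: "i < j" "j \<le> n" "?f i = ?f j" for i j
  proof -
    have xj: "x [^]\<^bsub>G\<^esub> j \<in> carrier G" "x [^]\<^bsub>G\<^esub> i \<in> carrier G" "x [^]\<^bsub>G\<^esub> (j - i) \<in> carrier G" using x by auto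
    have "x [^]\<^bsub>G\<^esub> j \<in> H #>\<^bsub>G\<^esub> (x [^]\<^bsub>G\<^esub> i)"
      using grp.repr_independenceD[OF H xj(1) ij(3)] .
    then have "x [^]\<^bsub>G\<^esub> j \<otimes>\<^bsub>G\<^esub> inv\<^bsub>G\<^esub> (x [^]\<^bsub>G\<^esub> i) \<in> H"
      using subgroup.rcos_module_imp[OF H is_group xj(2)] by blast
    moreover have "x [^]\<^bsub>G\<^esub> j = x [^]\<^bsub>G\<^esub> (j - i) \<otimes>\<^bsub>G\<^esub> x [^]\<^bsub>G\<^esub> i"
      using grp.nat_pow_mult[OF x, of "j - i" i] ij by simp
    ultimately have "x [^]\<^bsub>G\<^esub> (j - i) \<in> H" using xj by (simp add: grp.m_assoc)
    moreover have "j - i dvd fact n" using ij by (intro dvd_fact) auto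
    then obtain k where k: "fact n = (j - i) * k" by blast
    ultimately have "(x [^]\<^bsub>G\<^esub> (j - i)) [^]\<^bsub>G\<^esub> k \<in> H" using sub_pow_closed[OF H] by blast
    then show ?thesis using grp.nat_pow_pow[OF x] k by simp
  qed
  show ?thesis
  proof (cases "i < j")
    case True then show ?thesis using main ij by auto
  next
    case False then have "j < i" using ij by simp
    then show ?thesis using main[of j i] ij by auto
  qed
qed

definition Sn :: "nat \<Rightarrow> (nat \<Rightarrow> int mat) set set" where
  "Sn n = {H. open_subgroup_SL p d H \<and> finite (rcosets\<^bsub>SL_Zp p d\<^esub> H) \<and> card (rcosets\<^bsub>SL_Zp p d\<^esub> H) \<le> n}"

lemma open_K: "open_subgroup_SL p d H \<longleftrightarrow> subgroup H G \<and> (\<exists>k. K k \<subseteq> H)"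
  by (simp add: open_subgroup_SL_def K_def)

lemma Sn_contains:
  assumes pr: "prime p" and H: "H \<in> Sn n"
  and N: "fact n = p^e * u" "\<not> p dvd u"
  shows "K (e + 2) \<subseteq> H"
proof -
  have Hs: "subgroup H G" and ex: "\<exists>k. K k \<subseteq> H" and fin: "finite (rcosets\<^bsub>G\<^esub> H)" and cn: "card (rcosets\<^bsub>G\<^esub> H) \<le> n"
    using H by (auto simp: Sn_def open_K)
  have pw: "\<And>x. x \<in> carrier G \<Longrightarrow> x [^]\<^bsub>G\<^esub> (fact n :: nat) \<in> H" using pow_in[OF Hs fin cn] by blast
  have step: "K (e + 2 + m) \<subseteq> H \<Longrightarrow> K (e + 2) \<subseteq> H" for m
  proof (induction m)
    case 0 then show ?case by simp
  next
    case (Suc m)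
    have "K (Suc (e + 2 + m)) \<subseteq> H" using Suc.prems by simp
    then have "K (e + 2 + m) \<subseteq> H" using descent[OF pr Hs N pw] by simp
    then show ?case using Suc.IH by simp
  qed
  obtain k where k: "K k \<subseteq> H" using ex by blast
  show ?thesis
  proof (cases "k \<le> e + 2")
    case True then show ?thesis using K_mono[OF True] k by auto
  next
    case False
    then have "k = e + 2 + (k - (e + 2))" by simp
    then show ?thesis using step[of "k - (e+2)"] k by metis
  qed
qed

lemma Sn_finite: assumes pr: "prime p" shows "finite (Sn n)"
proof -
  obtain e u where N: "fact n = p^e * u" "\<not> p dvd u" using pe_decomp[OF p2, of "fact n"] by auto
  let ?L = "e + 2"
  let ?g = "\<lambda>H. (\<lambda>x. x ?L) ` H"
  have cont: "K ?L \<subseteq> H" if "H \<in> Sn n" for H using Sn_contains[OF pr that N] .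
  have sg: "subgroup H G" if "H \<in> Sn n" for H using that by (auto simp: Sn_def open_K)
  have incl: "H \<subseteq> H'" if H: "H \<in> Sn n" and H': "H' \<in> Sn n" and eq: "?g H = ?g H'" for H H'
  proof
    fix h assume h: "h \<in> H"
    then have "h ?L \<in> ?g H'" using eq by auto
    then obtain h' where h': "h' \<in> H'" "h' ?L = h ?L" by auto
    have hc: "h \<in> carrier G" using h subgroup.subset[OF sg[OF H]] by auto
    have h'c: "h' \<in> carrier G" using h' subgroup.subset[OF sg[OF H']] by auto
    have "inv\<^bsub>G\<^esub> h' \<otimes>\<^bsub>G\<^esub> h \<in> K ?L" using K_eq[OF h'c hc h'(2)] by simp
    then have "inv\<^bsub>G\<^esub> h' \<otimes>\<^bsub>G\<^esub> h \<in> H'" using cont[OF H'] by auto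
    then have "h' \<otimes>\<^bsub>G\<^esub> (inv\<^bsub>G\<^esub> h' \<otimes>\<^bsub>G\<^esub> h) \<in> H'" using subgroup.m_closed[OF sg[OF H'] h'(1)] by blast
    moreover have "h' \<otimes>\<^bsub>G\<^esub> (inv\<^bsub>G\<^esub> h' \<otimes>\<^bsub>G\<^esub> h) = h" using h'c hc by (simp add: grp.m_assoc[symmetric])
    ultimately show "h \<in> H'" by simp
  qed
  have inj: "inj_on ?g (Sn n)"
    unfolding inj_on_def using incl by blast
  have img: "?g ` Sn n \<subseteq> Pow (matset d (int p ^ ?L))"
  proof
    fix X assume "X \<in> ?g ` Sn n"
    then obtain H where H: "H \<in> Sn n" "X = ?g H" by blast
    have "\<forall>x\<in>H. x ?L \<in> matset d (int p ^ ?L)" using lev_matset subgroup.subset[OF sg[OF H(1)]] by blast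
    then show "X \<in> Pow (matset d (int p ^ ?L))" using H(2) by blast
  qed
  show ?thesis by (rule inj_on_finite[OF inj img]) (use matset_card in auto)
qed

end

definition lin :: "nat \<Rightarrow> nat \<Rightarrow> (nat \<times> nat \<Rightarrow> int) \<Rightarrow> nat \<Rightarrow> int mat \<Rightarrow> int" where
  "lin n a F b X = X $$ (b div n, b mod n) - (\<Sum>c<a. F (b,c) * X $$ (c div n, c mod n))"

definition condF :: "nat \<Rightarrow> nat \<Rightarrow> (nat \<times> nat \<Rightarrow> int) \<Rightarrow> int \<Rightarrow> int mat \<Rightarrow> bool" where
  "condF n a F Q X = (\<forall>b\<in>{a..<n*n-1}. lin n a F b X mod Q = 0)"

lemma lin_add: assumes X: "X \<in> carrier_mat n n" and Y: "Y \<in> carrier_mat n n"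
  and a: "a \<le> n*n-1" and b: "b < n*n-1"
  shows "lin n a F b (X + Y) = lin n a F b X + lin n a F b Y"
proof -
  have "(\<Sum>c<a. F (b,c) * (X + Y) $$ (c div n, c mod n)) = (\<Sum>c<a. F (b,c) * X $$ (c div n, c mod n) + F (b,c) * Y $$ (c div n, c mod n))"
  proof (rule sum.cong)
    fix c assume "c \<in> {..<a}"
    then have "c < n*n-1" using a by auto
    then show "F (b,c) * (X + Y) $$ (c div n, c mod n) = F (b,c) * X $$ (c div n, c mod n) + F (b,c) * Y $$ (c div n, c mod n)"
      using coord_facts[of c n] X Y by (simp add: algebra_simps)
  qed simp
  then show ?thesis unfolding lin_def using coord_facts[OF b] X Y by (simp add: sum.distrib)
qed

lemma lin_cong: assumes X: "X \<in> carrier_mat n n" and X': "X' \<in> carrier_mat n n"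
  and r: "red_mat Q X = red_mat Q X'" and a: "a \<le> n*n-1" and b: "b < n*n-1"
  shows "lin n a F b X mod Q = lin n a F b X' mod Q"
proof -
  have e: "X $$ (c div n, c mod n) mod Q = X' $$ (c div n, c mod n) mod Q" if "c < n*n-1" for c
    using red_eqD[OF r] coord_facts[OF that] X by auto
  have s: "(\<Sum>c<a. F (b,c) * X $$ (c div n, c mod n)) mod Q = (\<Sum>c<a. F (b,c) * X' $$ (c div n, c mod n)) mod Q"
  proof -
    have "(\<Sum>c<a. F (b,c) * X $$ (c div n, c mod n)) mod Q = (\<Sum>c<a. (F (b,c) * X $$ (c div n, c mod n)) mod Q) mod Q"
      by (simp add: mod_sum_eq)
    also have "\<dots> = (\<Sum>c<a. (F (b,c) * X' $$ (c div n, c mod n)) mod Q) mod Q"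
    proof (rule arg_cong[where f="\<lambda>x. x mod Q"], rule sum.cong)
      fix c assume "c \<in> {..<a}"
      then have "c < n*n-1" using a by auto
      then have "X $$ (c div n, c mod n) mod Q = X' $$ (c div n, c mod n) mod Q" by (rule e)
      then have "(F (b,c) * (X $$ (c div n, c mod n) mod Q)) mod Q = (F (b,c) * (X' $$ (c div n, c mod n) mod Q)) mod Q"
        by simp
      then show "(F (b,c) * X $$ (c div n, c mod n)) mod Q = (F (b,c) * X' $$ (c div n, c mod n)) mod Q"
        by (simp add: mod_mult_right_eq)
    qed simp
    also have "\<dots> = (\<Sum>c<a. F (b,c) * X' $$ (c div n, c mod n)) mod Q" by (simp add: mod_sum_eq)
    finally show ?thesis .
  qed
  let ?S = "(\<Sum>c<a. F (b,c) * X $$ (c div n, c mod n))" and ?S' = "(\<Sum>c<a. F (b,c) * X' $$ (c div n, c mod n))"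
  have "(X $$ (b div n, b mod n) - ?S) mod Q = (X $$ (b div n, b mod n) mod Q - ?S mod Q) mod Q"
    by (simp add: mod_diff_eq)
  also have "\<dots> = (X' $$ (b div n, b mod n) mod Q - ?S' mod Q) mod Q" using e[OF b] s by simp
  also have "\<dots> = (X' $$ (b div n, b mod n) - ?S') mod Q" by (simp add: mod_diff_eq)
  finally show ?thesis unfolding lin_def .
qed

lemma condF_zero: assumes a: "a \<le> n*n-1" shows "condF n a F Q (0\<^sub>m n n)"
proof -
  have "lin n a F b (0\<^sub>m n n) = 0" if "b < n*n-1" for b
  proof -
    have "(\<Sum>c<a. F (b,c) * 0\<^sub>m n n $$ (c div n, c mod n)) = 0"
    proof (rule sum.neutral, rule ballI)
      fix c assume "c \<in> {..<a}"
      then have "c < n*n-1" using a by auto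
      then show "F (b,c) * 0\<^sub>m n n $$ (c div n, c mod n) = 0" using coord_facts[of c n] by simp
    qed
    then show ?thesis unfolding lin_def using coord_facts[OF that] by simp
  qed
  then show ?thesis by (auto simp: condF_def)
qed

lemma red_QQ_cancel: fixes Q :: int assumes Q: "Q \<noteq> 0"
  and X: "X \<in> carrier_mat n n" and X': "X' \<in> carrier_mat n n"
  and r: "red_mat (Q*Q) (1\<^sub>m n + Q \<cdot>\<^sub>m X) = red_mat (Q*Q) (1\<^sub>m n + Q \<cdot>\<^sub>m X')"
  shows "red_mat Q X = red_mat Q X'"
proof (rule eq_matI)
  fix i j assume ij: "i < dim_row (red_mat Q X')" "j < dim_col (red_mat Q X')"
  then have ij': "i < n" "j < n" using X' by auto
  have "((if i = j then 1 else 0) + Q * X $$ (i,j)) mod (Q*Q) = ((if i = j then 1 else 0) + Q * X' $$ (i,j)) mod (Q*Q)"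
    using red_eqD[OF r, of i j] ij' X X' by simp
  then have "Q * Q dvd Q * (X $$ (i,j) - X' $$ (i,j))" by (simp add: mod_eq_dvd_iff algebra_simps)
  then have "Q dvd X $$ (i,j) - X' $$ (i,j)" using Q by simp
  then show "red_mat Q X $$ (i, j) = red_mat Q X' $$ (i, j)" using ij' X X' by (simp add: mod_eq_dvd_iff)
qed (use X X' in auto)

context slp
begin

definition HF :: "nat \<Rightarrow> nat \<Rightarrow> (nat \<times> nat \<Rightarrow> int) \<Rightarrow> (nat \<Rightarrow> int mat) set" where
  "HF m a F = {x \<in> carrier G. \<exists>X \<in> carrier_mat d d.
      x (2*m) = red_mat (int p ^ m * int p ^ m) (1\<^sub>m d + int p ^ m \<cdot>\<^sub>m X) \<and> condF d a F (int p ^ m) X}"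

lemma pow2m: "int p ^ (2*m) = int p ^ m * int p ^ m"
  by (simp add: mult_2 power_add)

lemma Qnz: "int p ^ m \<noteq> 0" using p2 by simp

lemma HF_K: assumes m: "1 \<le> m" and x: "x \<in> carrier G" and X: "X \<in> carrier_mat d d"
  and xX: "x (2*m) = red_mat (int p ^ m * int p ^ m) (1\<^sub>m d + int p ^ m \<cdot>\<^sub>m X)"
  shows "x \<in> K m"
proof -
  let ?Q = "int p ^ m"
  have "x m = red_mat ?Q (x (2*m))" using G_lower[OF x, of m "2*m"] by simp
  also have "\<dots> = red_mat ?Q (1\<^sub>m d + ?Q \<cdot>\<^sub>m X)" unfolding xX by (rule red_red) simp
  also have "\<dots> = red_mat ?Q (1\<^sub>m d)" by (rule red_add_mult[of _ d d]) (use X in auto)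
  also have "\<dots> = \<one>\<^bsub>G\<^esub> m" by (simp add: one_G)
  finally show ?thesis using x by (simp add: K_def)
qed

lemma K_form: assumes m: "1 \<le> m" and x: "x \<in> K m"
  shows "\<exists>X \<in> carrier_mat d d. x (2*m) = red_mat (int p ^ m * int p ^ m) (1\<^sub>m d + int p ^ m \<cdot>\<^sub>m X)"
proof -
  let ?Q = "int p ^ m"
  have xc: "x \<in> carrier G" and xm: "x m = \<one>\<^bsub>G\<^esub> m" using x by (auto simp: K_def)
  have "red_mat ?Q (x (2*m)) = x m" using G_lower[OF xc, of m "2*m"] by simp
  also have "\<dots> = red_mat ?Q (1\<^sub>m d)" using xm by (simp add: one_G)
  finally obtain X where X: "X \<in> carrier_mat d d" "x (2*m) = 1\<^sub>m d + ?Q \<cdot>\<^sub>m X"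
    using cong_exact[OF G_car[OF xc], of "1\<^sub>m d" ?Q] by auto
  have "x (2*m) = red_mat (?Q * ?Q) (x (2*m))" using G_red_self[OF xc, of "2*m"] pow2m[of m] by simp
  then show ?thesis using X by auto
qed

lemma HF_memI: assumes x: "x \<in> carrier G" and X: "X \<in> carrier_mat d d"
  and xX: "x (2*m) = red_mat (int p ^ m * int p ^ m) (1\<^sub>m d + int p ^ m \<cdot>\<^sub>m X)"
  and a: "a \<le> d*d-1"
  shows "x \<in> HF m a F \<longleftrightarrow> condF d a F (int p ^ m) X"
proof
  assume "x \<in> HF m a F"
  then obtain X' where X': "X' \<in> carrier_mat d d" "x (2*m) = red_mat (int p ^ m * int p ^ m) (1\<^sub>m d + int p ^ m \<cdot>\<^sub>m X')"
    "condF d a F (int p ^ m) X'" by (auto simp: HF_def)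
  have r: "red_mat (int p ^ m) X' = red_mat (int p ^ m) X"
    by (rule red_QQ_cancel[OF Qnz X'(1) X]) (use X'(2) xX in simp)
  show "condF d a F (int p ^ m) X"
    unfolding condF_def using X'(3) lin_cong[OF X'(1) X r a] by (auto simp: condF_def)
next
  assume "condF d a F (int p ^ m) X"
  then show "x \<in> HF m a F" using x X xX by (auto simp: HF_def)
qed

lemma HF_sub: assumes m: "1 \<le> m" and a: "a \<le> d*d-1"
  shows "subgroup (HF m a F) G"
proof (rule grp.subgroupI)
  let ?Q = "int p ^ m"
  show "HF m a F \<subseteq> carrier G" by (auto simp: HF_def)
  have "\<one>\<^bsub>G\<^esub> (2*m) = red_mat (?Q * ?Q) (1\<^sub>m d + ?Q \<cdot>\<^sub>m 0\<^sub>m d d)"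
  proof -
    have "1\<^sub>m d + ?Q \<cdot>\<^sub>m 0\<^sub>m d d = (1\<^sub>m d :: int mat)" by (auto intro!: eq_matI)
    then show ?thesis using pow2m[of m] by (simp add: one_G)
  qed
  then have "\<one>\<^bsub>G\<^esub> \<in> HF m a F" using one_closed condF_zero[OF a] by (auto simp: HF_def intro!: bexI[of _ "0\<^sub>m d d"])
  then show "HF m a F \<noteq> {}" by auto
next
  let ?Q = "int p ^ m"
  fix x assume xH: "x \<in> HF m a F"
  then obtain X where xc: "x \<in> carrier G" and X: "X \<in> carrier_mat d d"
    and xX: "x (2*m) = red_mat (?Q * ?Q) (1\<^sub>m d + ?Q \<cdot>\<^sub>m X)" and cX: "condF d a F ?Q X" by (auto simp: HF_def)
  have xK: "x \<in> K m" by (rule HF_K[OF m xc X xX])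
  have ixK: "inv\<^bsub>G\<^esub> x \<in> K m" using subgroup.m_inv_closed[OF K_sub xK] .
  then have ixc: "inv\<^bsub>G\<^esub> x \<in> carrier G" by (auto simp: K_def)
  obtain Z where Z: "Z \<in> carrier_mat d d" and iZ: "(inv\<^bsub>G\<^esub> x) (2*m) = red_mat (?Q * ?Q) (1\<^sub>m d + ?Q \<cdot>\<^sub>m Z)"
    using K_form[OF m ixK] by blast
  have "red_mat (?Q * ?Q) (1\<^sub>m d + ?Q \<cdot>\<^sub>m (X + Z)) = (x \<otimes>\<^bsub>G\<^esub> inv\<^bsub>G\<^esub> x) (2*m)"
  proof -
    have "(x \<otimes>\<^bsub>G\<^esub> inv\<^bsub>G\<^esub> x) (2*m) = red_mat (?Q * ?Q) (x (2*m) * (inv\<^bsub>G\<^esub> x) (2*m))"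
      using pow2m[of m] by (simp add: lev_mult)
    also have "\<dots> = red_mat (?Q * ?Q) ((1\<^sub>m d + ?Q \<cdot>\<^sub>m X) * (1\<^sub>m d + ?Q \<cdot>\<^sub>m Z))"
      unfolding xX iZ by (rule red_mult) (use X Z in auto)
    also have "\<dots> = red_mat (?Q * ?Q) (1\<^sub>m d + ?Q \<cdot>\<^sub>m (X + Z))"
      by (rule CP[of _ d]) (use X Z in auto)
    finally show ?thesis by simp
  qed
  also have "\<dots> = red_mat (?Q * ?Q) (1\<^sub>m d + ?Q \<cdot>\<^sub>m 0\<^sub>m d d)"
  proof -
    have "1\<^sub>m d + ?Q \<cdot>\<^sub>m 0\<^sub>m d d = (1\<^sub>m d :: int mat)" by (auto intro!: eq_matI)
    then show ?thesis using xc pow2m[of m] by (simp add: one_G)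
  qed
  finally have eqQ: "red_mat (?Q * ?Q) (1\<^sub>m d + ?Q \<cdot>\<^sub>m (X + Z)) = red_mat (?Q * ?Q) (1\<^sub>m d + ?Q \<cdot>\<^sub>m 0\<^sub>m d d)" .
  have r0: "red_mat ?Q (X + Z) = red_mat ?Q (0\<^sub>m d d)"
    by (rule red_QQ_cancel[OF Qnz _ _ eqQ]) (use X Z in auto)
  have l0: "lin d a F b (X + Z) mod ?Q = lin d a F b (0\<^sub>m d d) mod ?Q" if "b < d*d-1" for b
    using lin_cong[OF _ _ r0 a that] X Z by auto
  have "condF d a F ?Q Z" unfolding condF_def
  proof
    fix b assume b: "b \<in> {a..<d*d-1}"
    then have bl: "b < d*d-1" by auto
    have "lin d a F b (0\<^sub>m d d) mod ?Q = 0" using condF_zero[OF a] b by (auto simp: condF_def)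
    then have "lin d a F b (X + Z) mod ?Q = 0" using l0[OF bl] by simp
    moreover have "lin d a F b X mod ?Q = 0" using cX b by (auto simp: condF_def)
    moreover have "lin d a F b (X + Z) = lin d a F b X + lin d a F b Z" by (rule lin_add[OF X Z a bl])
    ultimately have "lin d a F b Z = lin d a F b (X + Z) - lin d a F b X" 
      "lin d a F b (X + Z) mod ?Q = 0" "lin d a F b X mod ?Q = 0" by simp_all
    then have "?Q dvd lin d a F b (X + Z)" "?Q dvd lin d a F b X" "lin d a F b Z = lin d a F b (X + Z) - lin d a F b X"
      by (simp_all add: mod_eq_0_iff_dvd)
    then have "?Q dvd lin d a F b Z" by simp
    then show "lin d a F b Z mod ?Q = 0" by (simp add: mod_eq_0_iff_dvd)
  qed
  then show "inv\<^bsub>G\<^esub> x \<in> HF m a F" using ixc Z iZ by (auto simp: HF_def)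
next
  let ?Q = "int p ^ m"
  fix x y assume xH: "x \<in> HF m a F" and yH: "y \<in> HF m a F"
  then obtain X Y where xc: "x \<in> carrier G" and X: "X \<in> carrier_mat d d"
    and xX: "x (2*m) = red_mat (?Q * ?Q) (1\<^sub>m d + ?Q \<cdot>\<^sub>m X)" and cX: "condF d a F ?Q X"
    and yc: "y \<in> carrier G" and Y: "Y \<in> carrier_mat d d"
    and yY: "y (2*m) = red_mat (?Q * ?Q) (1\<^sub>m d + ?Q \<cdot>\<^sub>m Y)" and cY: "condF d a F ?Q Y"
    by (auto simp: HF_def)
  have "(x \<otimes>\<^bsub>G\<^esub> y) (2*m) = red_mat (?Q * ?Q) (x (2*m) * y (2*m))"
    using pow2m[of m] by (simp add: lev_mult)
  also have "\<dots> = red_mat (?Q * ?Q) ((1\<^sub>m d + ?Q \<cdot>\<^sub>m X) * (1\<^sub>m d + ?Q \<cdot>\<^sub>m Y))"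
    unfolding xX yY by (rule red_mult) (use X Y in auto)
  also have "\<dots> = red_mat (?Q * ?Q) (1\<^sub>m d + ?Q \<cdot>\<^sub>m (X + Y))"
    by (rule CP[of _ d]) (use X Y in auto)
  finally have e: "(x \<otimes>\<^bsub>G\<^esub> y) (2*m) = \<dots>" .
  have "condF d a F ?Q (X + Y)" unfolding condF_def
  proof
    fix b assume b: "b \<in> {a..<d*d-1}"
    then have bl: "b < d*d-1" by auto
    have "lin d a F b X mod ?Q = 0" "lin d a F b Y mod ?Q = 0" using cX cY b by (auto simp: condF_def)
    moreover have "(lin d a F b X + lin d a F b Y) mod ?Q = (lin d a F b X mod ?Q + lin d a F b Y mod ?Q) mod ?Q"
      by (simp add: mod_add_eq)
    ultimately show "lin d a F b (X + Y) mod ?Q = 0" using lin_add[OF X Y a bl] by simp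
  qed
  then show "x \<otimes>\<^bsub>G\<^esub> y \<in> HF m a F" using mult_closed[OF xc yc] e X Y by (auto simp: HF_def)
qed

lemma HF_open: assumes m: "1 \<le> m" and a: "a \<le> d*d-1"
  shows "open_subgroup_SL p d (HF m a F)"
  unfolding open_K
proof (intro conjI exI)
  show "subgroup (HF m a F) G" by (rule HF_sub[OF m a])
  show "K (2*m) \<subseteq> HF m a F"
  proof
    let ?Q = "int p ^ m"
    fix x assume x: "x \<in> K (2*m)"
    then have xc: "x \<in> carrier G" and x2: "x (2*m) = \<one>\<^bsub>G\<^esub> (2*m)" by (auto simp: K_def)
    have "1\<^sub>m d + ?Q \<cdot>\<^sub>m 0\<^sub>m d d = (1\<^sub>m d :: int mat)" by (auto intro!: eq_matI)
    then have "x (2*m) = red_mat (?Q * ?Q) (1\<^sub>m d + ?Q \<cdot>\<^sub>m 0\<^sub>m d d)" using x2 pow2m[of m] by (simp add: one_G)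
    then show "x \<in> HF m a F" using xc condF_zero[OF a] by (auto simp: HF_def intro!: bexI[of _ "0\<^sub>m d d"])
  qed
qed

end

context slp
begin

definition wv :: "nat \<Rightarrow> (nat \<Rightarrow> int) \<Rightarrow> nat \<Rightarrow> int mat" where
  "wv m v = iota (genprod d (int p ^ m) v [0..<d*d-1])"

lemma wv_props: "wv m v \<in> carrier G"
  "wv m v (2*m) = red_mat (int p ^ m * int p ^ m) (1\<^sub>m d + int p ^ m \<cdot>\<^sub>m BS d v [0..<d*d-1])"
proof -
  have gp: "genprod d (int p ^ m) v [0..<d*d-1] \<in> carrier_mat d d" "det (genprod d (int p ^ m) v [0..<d*d-1]) = 1"
    "red_mat (int p ^ m * int p ^ m) (genprod d (int p ^ m) v [0..<d*d-1]) =
     red_mat (int p ^ m * int p ^ m) (1\<^sub>m d + int p ^ m \<cdot>\<^sub>m BS d v [0..<d*d-1])"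
    using genprod_props[of "[0..<d*d-1]" d "int p ^ m" v] by (auto simp: atLeast0LessThan)
  show "wv m v \<in> carrier G" unfolding wv_def by (rule iota_closed[OF gp(1,2)])
  show "wv m v (2*m) = red_mat (int p ^ m * int p ^ m) (1\<^sub>m d + int p ^ m \<cdot>\<^sub>m BS d v [0..<d*d-1])"
    unfolding wv_def iota_def using gp(3) pow2m[of m] by simp
qed

lemma BS_pos: assumes c: "c < d*d-1" shows "BS d v [0..<d*d-1] $$ (c div d, c mod d) = v c"
proof -
  note cf = coord_facts[OF c]
  have "\<not> (c div d = d - 1 \<and> c mod d = d - 1)" using cf by auto
  then have "BS d v [0..<d*d-1] $$ (c div d, c mod d) = v (c div d * d + c mod d)"
    using BS_coord[OF cf(1,2)] by blast
  then show ?thesis by simp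
qed

lemma lin_BS: assumes a: "a \<le> d*d-1" and b: "b < d*d-1"
  shows "lin d a F b (BS d v [0..<d*d-1]) = v b - (\<Sum>c<a. F (b,c) * v c)"
proof -
  have "(\<Sum>c<a. F (b,c) * BS d v [0..<d*d-1] $$ (c div d, c mod d)) = (\<Sum>c<a. F (b,c) * v c)"
    by (rule sum.cong) (use a BS_pos in auto)
  then show ?thesis unfolding lin_def using BS_pos[OF b] by simp
qed

lemma wv_mem: assumes a: "a \<le> d*d-1"
  shows "wv m v \<in> HF m a F \<longleftrightarrow> (\<forall>b\<in>{a..<d*d-1}. (v b - (\<Sum>c<a. F (b,c) * v c)) mod (int p ^ m) = 0)"
proof -
  have "wv m v \<in> HF m a F \<longleftrightarrow> condF d a F (int p ^ m) (BS d v [0..<d*d-1])"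
    by (rule HF_memI[OF wv_props(1) BS_carrier wv_props(2) a])
  also have "\<dots> \<longleftrightarrow> (\<forall>b\<in>{a..<d*d-1}. (v b - (\<Sum>c<a. F (b,c) * v c)) mod (int p ^ m) = 0)"
    unfolding condF_def using lin_BS[OF a] by auto
  finally show ?thesis .
qed

definition FS :: "nat \<Rightarrow> nat \<Rightarrow> (nat \<times> nat \<Rightarrow> int) set" where
  "FS m a = PiE ({a..<d*d-1} \<times> {..<a}) (\<lambda>_. {0..<int p ^ m})"

lemma HF_inj: assumes a: "a \<le> d*d-1" shows "inj_on (HF m a) (FS m a)"
proof (rule inj_onI, rule ccontr)
  fix F F' assume F: "F \<in> FS m a" and F': "F' \<in> FS m a" and eq: "HF m a F = HF m a F'" and ne: "F \<noteq> F'"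
  then obtain z where z: "F z \<noteq> F' z" by blast
  have zd: "z \<in> {a..<d*d-1} \<times> {..<a}"
  proof (rule ccontr)
    assume nz: "z \<notin> {a..<d*d-1} \<times> {..<a}"
    have "F z = undefined" using PiE_arb[OF F[unfolded FS_def] nz] .
    moreover have "F' z = undefined" using PiE_arb[OF F'[unfolded FS_def] nz] .
    ultimately have "F z = F' z" by simp
    then show False using z by simp
  qed
  then obtain b c where bc: "z = (b,c)" "a \<le> b" "b < d*d-1" "c < a" by auto
  define v where "v i = (if i = c then 1 else if a \<le> i \<and> i < d*d-1 then F (i,c) else 0)" for i
  have sv: "(\<Sum>c'<a. G' (b',c') * v c') = G' (b',c)" for G' :: "nat \<times> nat \<Rightarrow> int" and b'
  proof -
    have "(\<Sum>c'<a. G' (b',c') * v c') = (\<Sum>c'<a. if c' = c then G' (b',c) else 0)"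
      by (rule sum.cong) (auto simp: v_def)
    also have "\<dots> = G' (b',c)" using bc by simp
    finally show ?thesis .
  qed
  have "wv m v \<in> HF m a F"
    unfolding wv_mem[OF a] using sv bc by (auto simp: v_def)
  then have "wv m v \<in> HF m a F'" using eq by simp
  then have "(v b - F' (b,c)) mod int p ^ m = 0" unfolding wv_mem[OF a] using sv bc by auto
  moreover have "v b = F (b,c)" using bc by (auto simp: v_def)
  ultimately have "(F (b,c) - F' (b,c)) mod int p ^ m = 0" by simp
  moreover have "F (b,c) \<in> {0..<int p ^ m}" "F' (b,c) \<in> {0..<int p ^ m}"
    using F F' zd bc by (auto simp: FS_def PiE_def Pi_def)
  ultimately have "F (b,c) = F' (b,c)"
  proof -
    assume h: "(F (b,c) - F' (b,c)) mod int p ^ m = 0" "F (b,c) \<in> {0..<int p ^ m}" "F' (b,c) \<in> {0..<int p ^ m}"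
    have d1: "int p ^ m dvd F (b,c) - F' (b,c)" using h(1) by (simp only: mod_eq_0_iff_dvd)
    have "F (b,c) mod int p ^ m = F' (b,c) mod int p ^ m" using d1 by (simp only: mod_eq_dvd_iff)
    moreover have "F (b,c) mod int p ^ m = F (b,c)" by (rule mod_pos_pos_trivial) (use h(2) in auto)
    moreover have "F' (b,c) mod int p ^ m = F' (b,c)" by (rule mod_pos_pos_trivial) (use h(3) in auto)
    ultimately show ?thesis by simp
  qed
  then show False using z bc by simp
qed

lemma HF_K2m: assumes m: "1 \<le> m" and a: "a \<le> d*d-1" shows "K (2*m) \<subseteq> HF m a F"
proof
  let ?Q = "int p ^ m"
  fix x assume x: "x \<in> K (2*m)"
  then have xc: "x \<in> carrier G" and x2: "x (2*m) = \<one>\<^bsub>G\<^esub> (2*m)" by (auto simp: K_def)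
  have "1\<^sub>m d + ?Q \<cdot>\<^sub>m 0\<^sub>m d d = (1\<^sub>m d :: int mat)" by (auto intro!: eq_matI)
  then have "x (2*m) = red_mat (?Q * ?Q) (1\<^sub>m d + ?Q \<cdot>\<^sub>m 0\<^sub>m d d)" using x2 pow2m[of m] by (simp add: one_G)
  then show "x \<in> HF m a F" using xc condF_zero[OF a] by (auto simp: HF_def intro!: bexI[of _ "0\<^sub>m d d"])
qed

end

context slp
begin

lemma coset_same: assumes m: "1 \<le> m" and a: "a \<le> d*d-1"
  and C1: "C1 \<in> rcosets\<^bsub>G\<^esub> (HF m a F)" and C2: "C2 \<in> rcosets\<^bsub>G\<^esub> (HF m a F)"
  and x: "x \<in> C1" and y: "y \<in> C2" and e: "x (2*m) = y (2*m)"
  shows "C1 = C2"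
proof -
  let ?H = "HF m a F"
  have sg: "subgroup ?H G" by (rule HF_sub[OF m a])
  obtain g1 where g1: "g1 \<in> carrier G" "C1 = ?H #>\<^bsub>G\<^esub> g1" using C1 by (auto simp: RCOSETS_def)
  obtain g2 where g2: "g2 \<in> carrier G" "C2 = ?H #>\<^bsub>G\<^esub> g2" using C2 by (auto simp: RCOSETS_def)
  have xc: "x \<in> carrier G" using subgroup.elemrcos_carrier[OF sg is_group g1(1)] x g1 by blast
  have yc: "y \<in> carrier G" using subgroup.elemrcos_carrier[OF sg is_group g2(1)] y g2 by blast
  have "x \<otimes>\<^bsub>G\<^esub> inv\<^bsub>G\<^esub> y \<in> K (2*m)" using K_eq(2)[OF yc xc] e by simp
  then have "x \<otimes>\<^bsub>G\<^esub> inv\<^bsub>G\<^esub> y \<in> ?H" using HF_K2m[OF m a] by auto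
  then have "x \<in> ?H #>\<^bsub>G\<^esub> y" using subgroup.rcos_module_rev[OF sg is_group yc xc] by blast
  then have "?H #>\<^bsub>G\<^esub> y = ?H #>\<^bsub>G\<^esub> x" using grp.repr_independence[OF _ yc sg] by blast
  moreover have "?H #>\<^bsub>G\<^esub> g1 = ?H #>\<^bsub>G\<^esub> x" using grp.repr_independence[OF _ g1(1) sg] x g1 by blast
  moreover have "?H #>\<^bsub>G\<^esub> g2 = ?H #>\<^bsub>G\<^esub> y" using grp.repr_independence[OF _ g2(1) sg] y g2 by blast
  ultimately show ?thesis using g1 g2 by simp
qed

lemma coset_big: assumes m: "1 \<le> m" and a: "a \<le> d*d-1"
  and C: "C \<in> rcosets\<^bsub>G\<^esub> (HF m a F)"
  shows "p^(m*a) \<le> card ((\<lambda>x. x (2*m)) ` C)"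
proof -
  let ?H = "HF m a F" and ?Q = "int p ^ m"
  have sg: "subgroup ?H G" by (rule HF_sub[OF m a])
  obtain g where g: "g \<in> carrier G" "C = ?H #>\<^bsub>G\<^esub> g" using C by (auto simp: RCOSETS_def)
  have Cc: "C \<subseteq> carrier G" using subgroup.elemrcos_carrier[OF sg is_group g(1)] g by blast
  let ?V = "PiE {..<a} (\<lambda>_. {0..<?Q})"
  define ext where "ext v i = (if i < a then v i else if i < d*d-1 then (\<Sum>c<a. F (i,c) * v c) else 0)" for v :: "nat \<Rightarrow> int" and i
  define phi where "phi v = (wv m (ext v) \<otimes>\<^bsub>G\<^esub> g) (2*m)" for v
  have wH: "wv m (ext v) \<in> ?H" for v
    unfolding wv_mem[OF a]
  proof
    fix b assume b: "b \<in> {a..<d*d-1}"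
    have "(\<Sum>c<a. F (b,c) * ext v c) = (\<Sum>c<a. F (b,c) * v c)" by (rule sum.cong) (auto simp: ext_def)
    then show "(ext v b - (\<Sum>c<a. F (b,c) * ext v c)) mod ?Q = 0" using b by (simp add: ext_def)
  qed
  have img: "phi ` ?V \<subseteq> (\<lambda>x. x (2*m)) ` C"
  proof
    fix z assume "z \<in> phi ` ?V"
    then obtain v where z: "z = phi v" by blast
    have "wv m (ext v) \<otimes>\<^bsub>G\<^esub> g \<in> C" using wH[of v] g by (auto simp: r_coset_def)
    then show "z \<in> (\<lambda>x. x (2*m)) ` C" using z phi_def by auto
  qed
  have inj: "inj_on phi ?V"
  proof (rule inj_onI)
    fix v1 v2 assume v1: "v1 \<in> ?V" and v2: "v2 \<in> ?V" and e: "phi v1 = phi v2"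
    let ?w1 = "wv m (ext v1)" and ?w2 = "wv m (ext v2)"
    have w1: "?w1 \<in> carrier G" and w2: "?w2 \<in> carrier G" using wv_props by auto
    have "((?w1 \<otimes>\<^bsub>G\<^esub> g) \<otimes>\<^bsub>G\<^esub> inv\<^bsub>G\<^esub> g) (2*m) = ((?w2 \<otimes>\<^bsub>G\<^esub> g) \<otimes>\<^bsub>G\<^esub> inv\<^bsub>G\<^esub> g) (2*m)"
      by (rule lev_cong) (use e in \<open>auto simp: phi_def\<close>)
    then have "?w1 (2*m) = ?w2 (2*m)" using w1 w2 g(1) by (simp add: grp.m_assoc)
    then have "red_mat (?Q * ?Q) (1\<^sub>m d + ?Q \<cdot>\<^sub>m BS d (ext v1) [0..<d*d-1]) = red_mat (?Q * ?Q) (1\<^sub>m d + ?Q \<cdot>\<^sub>m BS d (ext v2) [0..<d*d-1])"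
      using wv_props(2) by simp
    then have r: "red_mat ?Q (BS d (ext v1) [0..<d*d-1]) = red_mat ?Q (BS d (ext v2) [0..<d*d-1])"
      by (rule red_QQ_cancel[OF Qnz BS_carrier BS_carrier])
    show "v1 = v2"
    proof (rule PiE_ext[OF v1 v2])
      fix c assume c: "c \<in> {..<a}"
      then have cl: "c < d*d-1" using a by auto
      note cf = coord_facts[OF cl]
      have "BS d (ext v1) [0..<d*d-1] $$ (c div d, c mod d) mod ?Q = BS d (ext v2) [0..<d*d-1] $$ (c div d, c mod d) mod ?Q"
        using red_eqD[OF r] cf by simp
      then have "v1 c mod ?Q = v2 c mod ?Q" using BS_pos[OF cl] c by (simp add: ext_def)
      moreover have "v1 c \<in> {0..<?Q}" "v2 c \<in> {0..<?Q}" using v1 v2 c by (auto simp: PiE_def Pi_def)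
      ultimately show "v1 c = v2 c" by (metis atLeastLessThan_iff mod_pos_pos_trivial)
    qed
  qed
  have fin: "finite ((\<lambda>x. x (2*m)) ` C)"
  proof (rule finite_subset)
    show "(\<lambda>x. x (2*m)) ` C \<subseteq> matset d (int p ^ (2*m))" using lev_matset Cc by auto
    show "finite (matset d (int p ^ (2*m)))" using matset_card by auto
  qed
  have "card ?V = p^(m*a)"
  proof -
    have "card ?V = (\<Prod>i<a. card {0..<?Q})" by (simp add: card_PiE)
    also have "\<dots> = (p^m)^a" by (simp add: nat_power_eq)
    finally show ?thesis by (simp add: power_mult)
  qed
  moreover have "card ?V = card (phi ` ?V)" using card_image[OF inj] by simp
  moreover have "card (phi ` ?V) \<le> card ((\<lambda>x. x (2*m)) ` C)" by (rule card_mono[OF fin img])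
  ultimately show ?thesis by simp
qed

lemma index_bound: assumes m: "1 \<le> m" and a: "a \<le> d*d-1"
  shows "finite (rcosets\<^bsub>G\<^esub> (HF m a F)) \<and> card (rcosets\<^bsub>G\<^esub> (HF m a F)) \<le> p^(m*(2*d*d - a))"
proof -
  let ?H = "HF m a F" and ?R = "rcosets\<^bsub>G\<^esub> (HF m a F)" and ?pi = "\<lambda>x::nat \<Rightarrow> int mat. x (2*m)"
  let ?T = "matset d (int p ^ (2*m))"
  have sg: "subgroup ?H G" by (rule HF_sub[OF m a])
  have Csub: "C \<subseteq> carrier G" if "C \<in> ?R" for C
    using that subgroup.rcosets_carrier[OF sg is_group] by blast
  have Tfin: "finite ?T" and Tcard: "card ?T \<le> nat (int p ^ (2*m)) ^ (d*d)" using matset_card by auto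
  have imgT: "?pi ` C \<subseteq> ?T" if "C \<in> ?R" for C using lev_matset Csub[OF that] by auto
  have nonempty: "C \<noteq> {}" if CR: "C \<in> ?R" for C
  proof -
    obtain g where g: "g \<in> carrier G" "C = ?H #>\<^bsub>G\<^esub> g" using CR by (auto simp: RCOSETS_def)
    then show ?thesis using grp.rcos_self[OF g(1) sg] by auto
  qed
  have disj: "?pi ` C1 \<inter> ?pi ` C2 = {}" if "C1 \<in> ?R" "C2 \<in> ?R" "C1 \<noteq> C2" for C1 C2
    using coset_same[OF m a that(1) that(2)] that(3) by auto
  have inj: "inj_on (\<lambda>C. ?pi ` C) ?R"
  proof (rule inj_onI)
    fix C1 C2 assume C: "C1 \<in> ?R" "C2 \<in> ?R" and e: "?pi ` C1 = ?pi ` C2"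
    show "C1 = C2"
    proof (rule ccontr)
      assume "C1 \<noteq> C2"
      then have "?pi ` C1 \<inter> ?pi ` C2 = {}" using disj C by blast
      then show False using e nonempty[OF C(1)] by auto
    qed
  qed
  have Rfin: "finite ?R"
    by (rule inj_on_finite[OF inj, of "Pow ?T"]) (use imgT Tfin in auto)
  have "(\<Sum>C\<in>?R. card (?pi ` C)) = card (\<Union>C\<in>?R. ?pi ` C)"
    by (rule card_UN_disjoint[symmetric]) (use Rfin imgT Tfin disj in \<open>auto intro: finite_subset\<close>)
  also have "\<dots> \<le> card ?T" by (rule card_mono[OF Tfin]) (use imgT in auto)
  also have "\<dots> \<le> p^(2*m*(d*d))" using Tcard by (simp add: nat_power_eq power_mult)
  finally have s: "(\<Sum>C\<in>?R. card (?pi ` C)) \<le> p^(2*m*(d*d))" .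
  have "card ?R * p^(m*a) \<le> (\<Sum>C\<in>?R. card (?pi ` C))"
    using sum_bounded_below[of ?R "p^(m*a)" "\<lambda>C. card (?pi ` C)"] coset_big[OF m a] by simp
  with s have le: "card ?R * p^(m*a) \<le> p^(2*m*(d*d))" by linarith
  have "2*m*(d*d) = m*a + m*(2*d*d - a)"
  proof -
    have "a \<le> 2*d*d" using a by simp
    then have "2*d*d = a + (2*d*d - a)" by simp
    then have "m*(2*d*d) = m*a + m*(2*d*d - a)" by (metis add_mult_distrib2)
    then show ?thesis by (simp add: algebra_simps)
  qed
  then have "p^(2*m*(d*d)) = p^(m*(2*d*d - a)) * p^(m*a)" by (simp add: power_add)
  with le have "card ?R * p^(m*a) \<le> p^(m*(2*d*d - a)) * p^(m*a)" by simp
  moreover have "0 < p^(m*a)" using p2 by simp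
  ultimately have "card ?R \<le> p^(m*(2*d*d - a))" by (rule mult_right_le_imp_le)
  then show ?thesis using Rfin by simp
qed

lemma count_lower: assumes pr: "prime p" and m: "1 \<le> m" and a: "a \<le> d*d-1"
  shows "p^(m*((d*d-1-a)*a)) \<le> card (Sn (p^(m*(2*d*d - a))))"
proof -
  let ?n = "p^(m*(2*d*d - a))"
  have sub: "HF m a ` FS m a \<subseteq> Sn ?n"
    using HF_open[OF m a] index_bound[OF m a] by (auto simp: Sn_def)
  have "card (FS m a) = p^(m*((d*d-1-a)*a))"
  proof -
    have "card (FS m a) = (\<Prod>i\<in>{a..<d*d-1} \<times> {..<a}. card {0..<int p ^ m})"
      unfolding FS_def by (rule card_PiE) simp
    also have "\<dots> = (p^m)^((d*d-1-a)*a)" by (simp add: nat_power_eq card_cartesian_product)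
    finally show ?thesis by (simp add: power_mult)
  qed
  moreover have "card (FS m a) = card (HF m a ` FS m a)" using card_image[OF HF_inj[OF a]] by simp
  moreover have "card (HF m a ` FS m a) \<le> card (Sn ?n)" by (rule card_mono[OF Sn_finite[OF pr] sub])
  ultimately show ?thesis by simp
qed

end

lemma real_key:
  fixes x a :: real
  defines "s \<equiv> sqrt 2"
  assumes x: "x \<ge> 0" and a1: "a \<le> (2 - s) * x" and a2: "(2 - s) * x - 1 < a"
  shows "(2*x - a) * ((3 - 2*s) * x - 2*(2 - s)) \<le> (x - 1 - a) * a"
proof -
  have s2: "s * s = 2" unfolding s_def by simp
  have s0: "s > 0" unfolding s_def by simp
  define t where "t = (2 - s) * x - a"
  have t: "0 \<le> t" "t < 1" using a1 a2 by (auto simp: t_def)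
  have at: "a = (2 - s) * x - t" by (simp add: t_def)
  have id: "(x - 1 - a) * a - (2*x - a) * ((3 - 2*s) * x - 2*(2 - s)) = (5*s - 6) * x + t * (1 - t + 2*(2 - s))"
  proof -
    have "(x - 1 - a) * a - (2*x - a) * ((3 - 2*s) * x - 2*(2 - s)) - ((5*s - 6) * x + t * (1 - t + 2*(2 - s)))
        = (s*s - 2) * (x*x - 2*x)"
      unfolding at by (simp add: algebra_simps)
    then show ?thesis using s2 by simp
  qed
  have "s > 6/5"
  proof (rule ccontr)
    assume "\<not> s > 6/5"
    then have "s \<le> 6/5" by simp
    then have "s * s \<le> 6/5 * (6/5)" using s0 by (intro mult_mono) auto
    then show False using s2 by simp
  qed
  then have "(5*s - 6) * x \<ge> 0" using x by simp
  moreover have "s < 2"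
  proof (rule ccontr)
    assume "\<not> s < 2"
    then have "s * s \<ge> 2 * 2" by (intro mult_mono) auto
    then show False using s2 by simp
  qed
  then have "t * (1 - t + 2*(2 - s)) \<ge> 0" using t by simp
  ultimately show ?thesis using id by linarith
qed

theorem proposition6p5:
  fixes p d :: nat
  assumes "prime p" and "odd p" and "d \<ge> 2"
  shows "infinite {n::nat. n > 0 \<and>
           real (num_open_subgroups p d n)
             \<ge> real n powr ((3 - 2 * sqrt 2) * real d ^ 2 - 2 * (2 - sqrt 2))}"
proof -
  have p2: "2 \<le> p" using assms(1) by (simp add: prime_ge_2_nat)
  interpret slp p d by unfold_locales (rule p2)
  define c where "c = (3 - 2 * sqrt 2) * real d ^ 2 - 2 * (2 - sqrt 2)"
  define x where "x = real (d*d)"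
  define a where "a = nat \<lfloor>(2 - sqrt 2) * x\<rfloor>"
  have x0: "x \<ge> 0" by (simp add: x_def)
  have s2: "sqrt 2 < 2"
  proof -
    have "sqrt 2 < sqrt (2^2)" by (subst real_sqrt_less_iff) simp
    then show ?thesis by simp
  qed
  have s1: "sqrt 2 > 1" by simp
  have apos: "(2 - sqrt 2) * x \<ge> 0" using s2 x0 by simp
  have a1: "real a \<le> (2 - sqrt 2) * x" using apos by (simp add: a_def)
  have a2: "(2 - sqrt 2) * x - 1 < real a" using apos by (simp add: a_def)
  have x4: "x \<ge> 4"
  proof -
    have "2 * 2 \<le> d * d" using assms(3) by (intro mult_mono) auto
    then have "real (2 * 2) \<le> real (d * d)" by (simp only: of_nat_le_iff)
    then show ?thesis by (simp add: x_def)
  qed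
  have aD: "a \<le> d*d - 1"
  proof -
    have "(2 - sqrt 2) * x \<le> x - 1"
    proof -
      have "(sqrt 2 - 1) * x \<ge> (sqrt 2 - 1) * 4" using x4 s1 by (intro mult_left_mono) auto
      moreover have "(sqrt 2 - 1) * 4 \<ge> 1"
      proof -
        have "sqrt 2 \<ge> 5/4" by (rule real_le_rsqrt) (simp add: power2_eq_square)
        then show ?thesis by simp
      qed
      ultimately show ?thesis by (simp add: algebra_simps)
    qed
    then have "real a \<le> x - 1" using a1 by simp
    moreover have dd1: "1 \<le> d*d" using assms(3) by (simp add: one_le_mult_iff)
    moreover have "real (d*d - 1) = x - 1" using dd1 by (simp add: x_def of_nat_diff)
    ultimately have "real a \<le> real (d*d - 1)" by simp
    then show ?thesis by (simp only: of_nat_le_iff)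
  qed
  have cdef: "c = (3 - 2 * sqrt 2) * x - 2 * (2 - sqrt 2)" by (simp add: c_def x_def power2_eq_square)
  have key: "real (2*d*d - a) * c \<le> real ((d*d-1-a)*a)"
  proof -
    have e1: "real (2*d*d - a) = 2*x - real a" using aD by (simp add: x_def of_nat_diff)
    have dd1: "1 \<le> d*d" using assms(3) by (simp add: one_le_mult_iff)
    have h: "Suc a \<le> d*d" using aD dd1 by linarith
    have "real (d*d-1-a) = x - 1 - real a" using h by (simp add: x_def of_nat_diff)
    then have e2: "real ((d*d-1-a)*a) = (x - 1 - real a) * real a" by simp
    show ?thesis unfolding e1 e2 cdef using real_key[OF x0 a1 a2] by simp
  qed
  define nn where "nn m = p^(m*(2*d*d - a))" for m
  have Epos: "0 < 2*d*d - a"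
  proof -
    have "0 < d*d" using assms(3) by simp
    moreover have "2*d*d = 2*(d*d)" by simp
    ultimately have "d*d - 1 < 2*d*d" by linarith
    then show ?thesis using aD by linarith
  qed
  have mem: "nn m \<in> {n::nat. n > 0 \<and> real (num_open_subgroups p d n) \<ge> real n powr c}" if m: "1 \<le> m" for m
  proof -
    have cnt: "p^(m*((d*d-1-a)*a)) \<le> num_open_subgroups p d (nn m)"
      using count_lower[OF assms(1) m aD] by (simp add: nn_def num_open_subgroups_def Sn_def)
    have "real (nn m) powr c = real p powr (real (m*(2*d*d - a)) * c)"
      using p2 by (simp add: nn_def powr_powr powr_realpow[symmetric])
    also have "\<dots> \<le> real p powr (real (m*((d*d-1-a)*a)))"
    proof (rule powr_mono)
      have "real (m*(2*d*d - a)) * c = real m * (real (2*d*d - a) * c)" by simp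
      also have "\<dots> \<le> real m * real ((d*d-1-a)*a)" using key by (intro mult_left_mono) auto
      finally show "real (m*(2*d*d - a)) * c \<le> real (m*((d*d-1-a)*a))" by simp
      show "1 \<le> real p" using p2 by simp
    qed
    also have "\<dots> = real (p^(m*((d*d-1-a)*a)))" by (subst powr_realpow) (use p2 in auto)
    also have "\<dots> \<le> real (num_open_subgroups p d (nn m))" using cnt by linarith
    finally show ?thesis using p2 by (simp add: nn_def c_def)
  qed
  have inj: "inj_on nn {1..}"
  proof (rule inj_onI)
    fix m1 m2 assume "nn m1 = nn m2"
    then have "m1 * (2*d*d - a) = m2 * (2*d*d - a)" using p2 by (simp add: nn_def power_inject_exp)
    then show "m1 = m2" using Epos by simp
  qed
  have "infinite (nn ` {1..})" using inj by (simp add: finite_image_iff infinite_Ici)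
  moreover have "nn ` {1..} \<subseteq> {n::nat. n > 0 \<and> real (num_open_subgroups p d n) \<ge> real n powr c}"
    using mem by auto
  ultimately show ?thesis unfolding c_def using infinite_super by blast
qed


end
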